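(* Let $\mathcal F=(F,<,+,0,\ldots)$ be a definably complete expansion of an ordered group. Let $G\subseteq F^m$ be a definably compact definable topological group and let $X\subseteq F^n$ be a definable $G$-set which is closed in $F^n$. Let $\varphi:X\to F$ be a definable continuous function. Then for every $x\in X$ the infimum $\inf\{\varphi(gx)\mid g\in G\}$ exists in $F$, so the function $\Phi:X\to F$, $\Phi(x)=\inf\{\varphi(gx)\mid g\in G\}$, is well-defined; moreover $\Phi$ is definable, $G$-invariant (i.e. $\Phi(gx)=\Phi(x)$ for all $g\in G$, $x\in X$) and continuous. In addition, for each $x\in X$ there exists $g_x\in G$ such that $\Phi(x)=\varphi(g_x x)$.
   Context: All topologies are the order topology on $F$ and the product topology on $F^k$. "Definable" means definable in $\mathcal F$ with parameters. $\mathcal F$ is definably complete if every definable subset of $F$ has a supremum and an infimum in $F\cup\{\pm\infty\}$. A definable topological group is a group $(G,\cdot)$ whose underlying set is a definable subset of some $F^m$ and whose multiplication and inverse maps are definable and continuous. A definable set is definably compact if it is closed and bounded in its ambient space $F^m$. A definable $G$-set is a definable set $X\subseteq F^n$ on which $G$ acts via a definable continuous map $G\times X\to X$, $(g,x)\mapsto gx$. *)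

theory Defs
  imports "HOL-Analysis.Analysis" "HOL-Algebra.Group"
begin

definition Fn :: "nat \<Rightarrow> (nat \<Rightarrow> 'a) set" where
  "Fn n = PiE {..<n} (\<lambda>_. UNIV)"

definition topF :: "nat \<Rightarrow> (nat \<Rightarrow> 'a::topological_space) topology" where
  "topF n = product_topology (\<lambda>_. euclidean) {..<n}"

definition tcat :: "nat \<Rightarrow> (nat \<Rightarrow> 'a) \<Rightarrow> (nat \<Rightarrow> 'a) \<Rightarrow> (nat \<Rightarrow> 'a)" where
  "tcat m x y = (\<lambda>i. if i < m then x i else y (i - m))"

definition tfst :: "nat \<Rightarrow> (nat \<Rightarrow> 'a) \<Rightarrow> (nat \<Rightarrow> 'a)" where
  "tfst m z = restrict z {..<m}"

definition tsnd :: "nat \<Rightarrow> nat \<Rightarrow> (nat \<Rightarrow> 'a) \<Rightarrow> (nat \<Rightarrow> 'a)" where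
  "tsnd m k z = (\<lambda>i\<in>{..<k}. z (m + i))"

definition tprod :: "nat \<Rightarrow> (nat \<Rightarrow> 'a) set \<Rightarrow> (nat \<Rightarrow> 'a) set \<Rightarrow> (nat \<Rightarrow> 'a) set" where
  "tprod m A B = {tcat m x y | x y. x \<in> A \<and> y \<in> B}"

definition tone :: "'a \<Rightarrow> (nat \<Rightarrow> 'a)" where
  "tone a = (\<lambda>i\<in>{..<1}. a)"

text \<open>A structure on F (collection of the definable sets, with parameters) expanding
  the ordered group (F,<,+,0): a family S n of subsets of F^n closed under boolean
  operations, cartesian product with F on either side, projection, containing the
  diagonals, the graph of <, the graph of +, and all singletons (parameters).\<close>
definition expansion_structure :: "(nat \<Rightarrow> (nat \<Rightarrow> 'a::linordered_ab_group_add) set set) \<Rightarrow> bool" where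
  "expansion_structure S \<longleftrightarrow>
     (\<forall>n. \<forall>A\<in>S n. A \<subseteq> Fn n) \<and>
     (\<forall>n. Fn n \<in> S n) \<and>
     (\<forall>n. \<forall>A\<in>S n. \<forall>B\<in>S n. A \<union> B \<in> S n) \<and>
     (\<forall>n. \<forall>A\<in>S n. Fn n - A \<in> S n) \<and>
     (\<forall>n. \<forall>A\<in>S n. {x \<in> Fn (Suc n). restrict x {..<n} \<in> A} \<in> S (Suc n)) \<and>
     (\<forall>n. \<forall>A\<in>S n. {x \<in> Fn (Suc n). (\<lambda>i\<in>{..<n}. x (Suc i)) \<in> A} \<in> S (Suc n)) \<and>
     (\<forall>n i j. i < n \<and> j < n \<longrightarrow> {x \<in> Fn n. x i = x j} \<in> S n) \<and>
     (\<forall>n. \<forall>A\<in>S (Suc n). (\<lambda>x. restrict x {..<n}) ` A \<in> S n) \<and>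
     {x \<in> Fn 2. x 0 < x 1} \<in> S 2 \<and>
     {x \<in> Fn 3. x 0 + x 1 = x 2} \<in> S 3 \<and>
     (\<forall>a. {x \<in> Fn 1. x 0 = a} \<in> S 1)"

definition is_sup :: "'a::linorder set \<Rightarrow> 'a \<Rightarrow> bool" where
  "is_sup B s \<longleftrightarrow> (\<forall>y\<in>B. y \<le> s) \<and> (\<forall>u. (\<forall>y\<in>B. y \<le> u) \<longrightarrow> s \<le> u)"

definition is_inf :: "'a::linorder set \<Rightarrow> 'a \<Rightarrow> bool" where
  "is_inf B s \<longleftrightarrow> (\<forall>y\<in>B. s \<le> y) \<and> (\<forall>u. (\<forall>y\<in>B. u \<le> y) \<longrightarrow> u \<le> s)"

text \<open>Definable completeness: every definable subset of F has a supremum and an infimum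
  in F \<union> {-\<infinity>,+\<infinity>}; i.e. every nonempty definable subset bounded above (below) has a
  least upper bound (greatest lower bound) in F (empty/unbounded sets have sup/inf \<plusminus>\<infinity>).\<close>
definition definably_complete :: "(nat \<Rightarrow> (nat \<Rightarrow> 'a::linordered_ab_group_add) set set) \<Rightarrow> bool" where
  "definably_complete S \<longleftrightarrow>
     (\<forall>A\<in>S 1. let B = (\<lambda>x. x 0) ` A in
        (B \<noteq> {} \<and> (\<exists>b. \<forall>y\<in>B. y \<le> b) \<longrightarrow> (\<exists>s. is_sup B s)) \<and>
        (B \<noteq> {} \<and> (\<exists>b. \<forall>y\<in>B. b \<le> y) \<longrightarrow> (\<exists>s. is_inf B s)))"

definition definable_map ::
  "(nat \<Rightarrow> (nat \<Rightarrow> 'a) set set) \<Rightarrow> nat \<Rightarrow> nat \<Rightarrow> (nat \<Rightarrow> 'a) set \<Rightarrow> ((nat \<Rightarrow> 'a) \<Rightarrow> (nat \<Rightarrow> 'a)) \<Rightarrow> bool" where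
  "definable_map S p k A f \<longleftrightarrow> (\<forall>x\<in>A. f x \<in> Fn k) \<and> {tcat p x (f x) | x. x \<in> A} \<in> S (p + k)"

definition definable_fun ::
  "(nat \<Rightarrow> (nat \<Rightarrow> 'a) set set) \<Rightarrow> nat \<Rightarrow> (nat \<Rightarrow> 'a) set \<Rightarrow> ((nat \<Rightarrow> 'a) \<Rightarrow> 'a) \<Rightarrow> bool" where
  "definable_fun S p A f \<longleftrightarrow> definable_map S p 1 A (\<lambda>x. tone (f x))"

definition definable_top_group ::
  "(nat \<Rightarrow> (nat \<Rightarrow> 'a::{linordered_ab_group_add,linorder_topology}) set set) \<Rightarrow> nat \<Rightarrow> (nat \<Rightarrow> 'a) monoid \<Rightarrow> bool" where
  "definable_top_group S m Gr \<longleftrightarrow>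
     group Gr \<and> carrier Gr \<in> S m \<and>
     definable_map S (m + m) m (tprod m (carrier Gr) (carrier Gr))
        (\<lambda>z. tfst m z \<otimes>\<^bsub>Gr\<^esub> tsnd m m z) \<and>
     definable_map S m m (carrier Gr) (\<lambda>g. inv\<^bsub>Gr\<^esub> g) \<and>
     continuous_map (subtopology (topF (m + m)) (tprod m (carrier Gr) (carrier Gr)))
        (subtopology (topF m) (carrier Gr)) (\<lambda>z. tfst m z \<otimes>\<^bsub>Gr\<^esub> tsnd m m z) \<and>
     continuous_map (subtopology (topF m) (carrier Gr)) (subtopology (topF m) (carrier Gr))
        (\<lambda>g. inv\<^bsub>Gr\<^esub> g)"

definition definably_compact :: "nat \<Rightarrow> (nat \<Rightarrow> 'a::{linorder,topological_space}) set \<Rightarrow> bool" where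
  "definably_compact m A \<longleftrightarrow> closedin (topF m) A \<and>
     (\<exists>a b. \<forall>x\<in>A. \<forall>i<m. a \<le> x i \<and> x i \<le> b)"

definition definable_G_set ::
  "(nat \<Rightarrow> (nat \<Rightarrow> 'a::{linordered_ab_group_add,linorder_topology}) set set) \<Rightarrow> nat \<Rightarrow> (nat \<Rightarrow> 'a) monoid \<Rightarrow>
   nat \<Rightarrow> (nat \<Rightarrow> 'a) set \<Rightarrow> ((nat \<Rightarrow> 'a) \<Rightarrow> (nat \<Rightarrow> 'a) \<Rightarrow> (nat \<Rightarrow> 'a)) \<Rightarrow> bool" where
  "definable_G_set S m Gr n X act \<longleftrightarrow>
     X \<in> S n \<and>
     (\<forall>g\<in>carrier Gr. \<forall>x\<in>X. act g x \<in> X) \<and>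
     (\<forall>x\<in>X. act \<one>\<^bsub>Gr\<^esub> x = x) \<and>
     (\<forall>g\<in>carrier Gr. \<forall>h\<in>carrier Gr. \<forall>x\<in>X. act (g \<otimes>\<^bsub>Gr\<^esub> h) x = act g (act h x)) \<and>
     definable_map S (m + n) n (tprod m (carrier Gr) X) (\<lambda>z. act (tfst m z) (tsnd m n z)) \<and>
     continuous_map (subtopology (topF (m + n)) (tprod m (carrier Gr) X))
        (subtopology (topF n) X) (\<lambda>z. act (tfst m z) (tsnd m n z))"

end

theory Submission
  imports Defs
begin


lemma Fn_iff: "x \<in> Fn n \<longleftrightarrow> (\<forall>i. n \<le> i \<longrightarrow> x i = undefined)"
  by (auto simp: Fn_def PiE_def extensional_def)

lemma restrict_Fn[simp]: "restrict x {..<n} \<in> Fn n"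
  by (simp add: Fn_iff)

lemma Fn_restrict_eq: "x \<in> Fn n \<Longrightarrow> restrict x {..<n} = x"
  by (rule ext) (auto simp: Fn_iff)

definition dfn :: "(nat \<Rightarrow> (nat \<Rightarrow> 'a) set set) \<Rightarrow> nat \<Rightarrow> ((nat \<Rightarrow> 'a) \<Rightarrow> bool) \<Rightarrow> bool" where
  "dfn S N P \<longleftrightarrow> {x \<in> Fn N. P x} \<in> S N"

definition blk :: "nat \<Rightarrow> nat \<Rightarrow> (nat \<Rightarrow> 'a) \<Rightarrow> (nat \<Rightarrow> 'a)" where
  "blk ofs k x = (\<lambda>i\<in>{..<k}. x (ofs + i))"

lemma blk_Fn[simp]: "blk ofs k x \<in> Fn k" by (simp add: blk_def Fn_iff)

locale ES =
  fixes S :: "nat \<Rightarrow> (nat \<Rightarrow> 'a::{linordered_ab_group_add,linorder_topology}) set set"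
  assumes es: "expansion_structure S"
begin

lemmas E = es[unfolded expansion_structure_def]
declare restrict_cong[cong]

lemma sub: "A \<in> S n \<Longrightarrow> A \<subseteq> Fn n" using E[THEN conjunct1] by blast
lemma full: "Fn n \<in> S n" using E[THEN conjunct2, THEN conjunct1] by blast
lemma Un: "A \<in> S n \<Longrightarrow> B \<in> S n \<Longrightarrow> A \<union> B \<in> S n" using E[THEN conjunct2, THEN conjunct2, THEN conjunct1] by blast
lemma diff: "A \<in> S n \<Longrightarrow> Fn n - A \<in> S n" using E[THEN conjunct2, THEN conjunct2, THEN conjunct2, THEN conjunct1] by blast
lemma cylR: "A \<in> S n \<Longrightarrow> {x \<in> Fn (Suc n). restrict x {..<n} \<in> A} \<in> S (Suc n)"
  using E[THEN conjunct2, THEN conjunct2, THEN conjunct2, THEN conjunct2, THEN conjunct1] by blast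
lemma cylL: "A \<in> S n \<Longrightarrow> {x \<in> Fn (Suc n). (\<lambda>i\<in>{..<n}. x (Suc i)) \<in> A} \<in> S (Suc n)"
  using E[THEN conjunct2, THEN conjunct2, THEN conjunct2, THEN conjunct2, THEN conjunct2, THEN conjunct1] by blast
lemma diag: "i < n \<Longrightarrow> j < n \<Longrightarrow> {x \<in> Fn n. x i = x j} \<in> S n"
  using E[THEN conjunct2, THEN conjunct2, THEN conjunct2, THEN conjunct2, THEN conjunct2, THEN conjunct2, THEN conjunct1] by blast
lemma proj: "A \<in> S (Suc n) \<Longrightarrow> (\<lambda>x. restrict x {..<n}) ` A \<in> S n"
  using E[THEN conjunct2, THEN conjunct2, THEN conjunct2, THEN conjunct2, THEN conjunct2, THEN conjunct2, THEN conjunct2, THEN conjunct1] by blast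
lemma ltS: "{x \<in> Fn 2. x 0 < x 1} \<in> S 2" using E[THEN conjunct2, THEN conjunct2, THEN conjunct2, THEN conjunct2, THEN conjunct2, THEN conjunct2, THEN conjunct2, THEN conjunct2, THEN conjunct1] by blast
lemma plusS: "{x \<in> Fn 3. x 0 + x 1 = x 2} \<in> S 3" using E[THEN conjunct2, THEN conjunct2, THEN conjunct2, THEN conjunct2, THEN conjunct2, THEN conjunct2, THEN conjunct2, THEN conjunct2, THEN conjunct2, THEN conjunct1] by blast
lemma constS: "{x \<in> Fn 1. x 0 = a} \<in> S 1" using E[THEN conjunct2, THEN conjunct2, THEN conjunct2, THEN conjunct2, THEN conjunct2, THEN conjunct2, THEN conjunct2, THEN conjunct2, THEN conjunct2, THEN conjunct2] by blast

lemma Int: assumes "A \<in> S n" "B \<in> S n" shows "A \<inter> B \<in> S n"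
proof -
  have "A \<inter> B = Fn n - ((Fn n - A) \<union> (Fn n - B))" using sub[OF assms(1)] sub[OF assms(2)] by blast
  thus ?thesis using assms by (simp add: diff Un)
qed

lemma cylL_iter: "A \<in> S k \<Longrightarrow> {z \<in> Fn (j + k). (\<lambda>i\<in>{..<k}. z (j + i)) \<in> A} \<in> S (j + k)"
proof (induction j)
  case 0
  have eq: "{z \<in> Fn (0 + k). (\<lambda>i\<in>{..<k}. z (0 + i)) \<in> A} = A"
    using sub[OF 0] by (auto simp: Fn_restrict_eq)
  show ?case unfolding eq using 0 by simp
next
  case (Suc j)
  let ?L = "{z \<in> Fn (j + k). (\<lambda>i\<in>{..<k}. z (j + i)) \<in> A}"
  have "{x \<in> Fn (Suc (j + k)). (\<lambda>i\<in>{..<j+k}. x (Suc i)) \<in> ?L} \<in> S (Suc (j+k))"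
    using cylL[OF Suc.IH[OF Suc.prems]] .
  moreover have "{x \<in> Fn (Suc (j + k)). (\<lambda>i\<in>{..<j+k}. x (Suc i)) \<in> ?L}
     = {z \<in> Fn (Suc j + k). (\<lambda>i\<in>{..<k}. z (Suc j + i)) \<in> A}"
  proof -
    have "\<And>x. (\<lambda>i\<in>{..<k}. (\<lambda>i\<in>{..<j+k}. x (Suc i)) (j + i)) = (\<lambda>i\<in>{..<k}. x (Suc j + i))"
      by (rule ext) auto
    moreover have "\<And>x. (\<lambda>i\<in>{..<j+k}. x (Suc i)) \<in> Fn (j+k)" by (simp add: Fn_iff)
    ultimately show ?thesis by auto
  qed
  ultimately show ?case by (metis add_Suc)
qed

lemma cylR_iter: "A \<in> S k \<Longrightarrow> {z \<in> Fn (k + j). restrict z {..<k} \<in> A} \<in> S (k + j)"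
proof (induction j)
  case 0
  have eq: "{z \<in> Fn (k + 0). restrict z {..<k} \<in> A} = A"
    using sub[OF 0] by (auto simp: Fn_restrict_eq)
  show ?case unfolding eq using 0 by simp
next
  case (Suc j)
  let ?L = "{z \<in> Fn (k + j). restrict z {..<k} \<in> A}"
  have "{x \<in> Fn (Suc (k + j)). restrict x {..<k+j} \<in> ?L} \<in> S (Suc (k+j))"
    using cylR[OF Suc.IH[OF Suc.prems]] .
  moreover have "{x \<in> Fn (Suc (k + j)). restrict x {..<k+j} \<in> ?L}
     = {z \<in> Fn (k + Suc j). restrict z {..<k} \<in> A}"
  proof -
    have "\<And>x. restrict (restrict x {..<k+j}) {..<k} = restrict x {..<k}"
      by (rule ext) auto
    thus ?thesis by auto
  qed
  ultimately show ?case by (metis add_Suc_right)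
qed

lemma proj_iter: "A \<in> S (k + j) \<Longrightarrow> (\<lambda>x. restrict x {..<k}) ` A \<in> S k"
proof (induction j arbitrary: A)
  case 0
  have eq: "(\<lambda>x. restrict x {..<k}) ` A = A"
    using sub[OF 0[simplified]] by (force simp: Fn_restrict_eq)
  show ?case unfolding eq using 0 by simp
next
  case (Suc j)
  have "(\<lambda>x. restrict x {..<k+j}) ` A \<in> S (k+j)" using proj Suc.prems by simp
  from Suc.IH[OF this] have "(\<lambda>x. restrict x {..<k}) ` (\<lambda>x. restrict x {..<k+j}) ` A \<in> S k" .
  moreover have "(\<lambda>x. restrict x {..<k}) ` (\<lambda>x. restrict x {..<k+j}) ` A = (\<lambda>x. restrict x {..<k}) ` A"
  proof -
    have "\<And>x. restrict (restrict x {..<k+j}) {..<k} = restrict x {..<k}" by (rule ext) auto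
    thus ?thesis by (simp add: image_image)
  qed
  ultimately show ?case by metis
qed

lemma diag_all: "(\<forall>i<(l::nat). f i < M \<and> g i < M) \<Longrightarrow> {z \<in> Fn M. \<forall>i<l. z (f i) = z (g i)} \<in> S M"
proof (induction l)
  case 0 thus ?case using full by simp
next
  case (Suc l)
  have eq: "{z \<in> Fn M. \<forall>i<Suc l. z (f i) = z (g i)} = {z \<in> Fn M. \<forall>i<l. z (f i) = z (g i)} \<inter> {z \<in> Fn M. z (f l) = z (g l)}"
    by (auto simp: less_Suc_eq)
  show ?case unfolding eq by (rule Int) (use Suc in \<open>auto intro: diag\<close>)
qed

lemma atom: assumes A: "A \<in> S k" and v: "\<forall>i<k. v i < N"
  shows "dfn S N (\<lambda>x. (\<lambda>i\<in>{..<k}. x (v i)) \<in> A)"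
proof -
  let ?B = "{z \<in> Fn (N + k). (\<lambda>i\<in>{..<k}. z (N + i)) \<in> A} \<inter> {z \<in> Fn (N+k). \<forall>i<k. z (N+i) = z (v i)}"
  have B: "?B \<in> S (N + k)"
    by (rule Int[OF cylL_iter[OF A] diag_all]) (use v in auto)
  have "(\<lambda>x. restrict x {..<N}) ` ?B = {x \<in> Fn N. (\<lambda>i\<in>{..<k}. x (v i)) \<in> A}"
  proof (intro equalityI subsetI)
    fix x assume "x \<in> (\<lambda>x. restrict x {..<N}) ` ?B"
    then obtain z where z: "z \<in> ?B" and xz: "x = restrict z {..<N}" by blast
    have "(\<lambda>i\<in>{..<k}. x (v i)) = (\<lambda>i\<in>{..<k}. z (N + i))"
      using z v by (auto simp: xz intro!: ext)
    thus "x \<in> {x \<in> Fn N. (\<lambda>i\<in>{..<k}. x (v i)) \<in> A}" using z xz by auto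
  next
    fix x assume x: "x \<in> {x \<in> Fn N. (\<lambda>i\<in>{..<k}. x (v i)) \<in> A}"
    define z where "z = (\<lambda>i. if i < N then x i else if i < N + k then x (v (i - N)) else undefined)"
    have zF: "z \<in> Fn (N+k)" by (auto simp: z_def Fn_iff)
    have 1: "(\<lambda>i\<in>{..<k}. z (N + i)) = (\<lambda>i\<in>{..<k}. x (v i))" by (auto simp: z_def intro!: ext)
    have 2: "\<forall>i<k. z (N+i) = z (v i)" using v by (auto simp: z_def)
    have 3: "restrict z {..<N} = x" using x by (auto simp: z_def Fn_iff intro!: ext)
    show "x \<in> (\<lambda>x. restrict x {..<N}) ` ?B"
      using zF 1 2 3 x by (auto intro!: image_eqI[of _ _ z])
  qed
  thus ?thesis using proj_iter[OF B] by (simp add: dfn_def)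
qed

lemma dfn_cong: "dfn S N P \<Longrightarrow> (\<And>x. x \<in> Fn N \<Longrightarrow> P x = Q x) \<Longrightarrow> dfn S N Q"
  unfolding dfn_def by (metis (mono_tags, lifting) Collect_cong)

lemma dfn_conj: assumes "dfn S N P" "dfn S N Q" shows "dfn S N (\<lambda>x. P x \<and> Q x)"
proof -
  have "{x \<in> Fn N. P x \<and> Q x} = {x \<in> Fn N. P x} \<inter> {x \<in> Fn N. Q x}" by blast
  thus ?thesis using Int assms unfolding dfn_def by simp
qed

lemma dfn_not: assumes "dfn S N P" shows "dfn S N (\<lambda>x. \<not> P x)"
proof -
  have "{x \<in> Fn N. \<not> P x} = Fn N - {x \<in> Fn N. P x}" by blast
  thus ?thesis using diff assms unfolding dfn_def by simp
qed

lemma dfn_disj: assumes "dfn S N P" "dfn S N Q" shows "dfn S N (\<lambda>x. P x \<or> Q x)"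
proof -
  have "{x \<in> Fn N. P x \<or> Q x} = {x \<in> Fn N. P x} \<union> {x \<in> Fn N. Q x}" by blast
  thus ?thesis using Un assms unfolding dfn_def by simp
qed

lemma dfn_imp: "dfn S N P \<Longrightarrow> dfn S N Q \<Longrightarrow> dfn S N (\<lambda>x. P x \<longrightarrow> Q x)"
  by (rule dfn_cong[OF dfn_disj[OF dfn_not]]) auto

lemma dfn_True: "dfn S N (\<lambda>x. True)" unfolding dfn_def using full by simp

lemma dfn_ex1: assumes "dfn S (Suc N) P" shows "dfn S N (\<lambda>x. \<exists>t. P (x(N := t)))"
proof -
  let ?A = "{y \<in> Fn (Suc N). P y}"
  have "(\<lambda>x. restrict x {..<N}) ` ?A \<in> S N" using proj assms by (simp add: dfn_def)
  moreover have "(\<lambda>x. restrict x {..<N}) ` ?A = {x \<in> Fn N. \<exists>t. P (x(N := t))}"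
  proof (intro equalityI subsetI)
    fix x assume "x \<in> (\<lambda>x. restrict x {..<N}) ` ?A"
    then obtain y where y: "y \<in> Fn (Suc N)" "P y" and xy: "x = restrict y {..<N}" by blast
    have "y = x(N := y N)" using y(1) unfolding xy by (intro ext) (simp add: Fn_iff)
    with y have "P (x(N := y N))" by metis
    moreover have "x \<in> Fn N" using xy by simp
    ultimately show "x \<in> {x \<in> Fn N. \<exists>t. P (x(N := t))}" by blast
  next
    fix x assume "x \<in> {x \<in> Fn N. \<exists>t. P (x(N := t))}"
    then obtain t where x: "x \<in> Fn N" "P (x(N := t))" by blast
    have "x(N := t) \<in> Fn (Suc N)" using x(1) by (auto simp: Fn_iff)
    moreover have "restrict (x(N := t)) {..<N} = x" using x(1) by (auto simp: Fn_iff intro!: ext)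
    ultimately show "x \<in> (\<lambda>x. restrict x {..<N}) ` ?A" using x by (metis (mono_tags, lifting) image_eqI mem_Collect_eq)
  qed
  ultimately show ?thesis by (simp add: dfn_def)
qed

lemma dfn_ex: "dfn S (Suc N) P \<Longrightarrow> (\<And>x. x \<in> Fn N \<Longrightarrow> Q x = (\<exists>t. P (x(N := t)))) \<Longrightarrow> dfn S N Q"
  by (rule dfn_cong[OF dfn_ex1]) auto

lemma dfn_all: "dfn S (Suc N) P \<Longrightarrow> (\<And>x. x \<in> Fn N \<Longrightarrow> Q x = (\<forall>t. P (x(N := t)))) \<Longrightarrow> dfn S N Q"
  by (rule dfn_cong[OF dfn_not[OF dfn_ex1[OF dfn_not]]]) auto

lemma dfn_exB1: "dfn S (N + k) P \<Longrightarrow> dfn S N (\<lambda>x. \<exists>y\<in>Fn k. P (tcat N x y))"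
proof (induction k arbitrary: P)
  case 0
  show ?case
  proof (rule dfn_cong[OF 0[simplified]])
    fix x :: "nat \<Rightarrow> 'a" assume x: "x \<in> Fn N"
    have F0: "Fn 0 = {\<lambda>_. undefined}" by (auto simp: Fn_iff)
    have "tcat N x (\<lambda>_. undefined) = x" using x by (auto simp: tcat_def Fn_iff intro!: ext)
    thus "P x = (\<exists>y\<in>Fn 0. P (tcat N x y))" by (simp add: F0)
  qed
next
  case (Suc k)
  have "dfn S (N + k) (\<lambda>w. \<exists>t. P (w(N + k := t)))" using dfn_ex1 Suc.prems by simp
  from Suc.IH[OF this] have h: "dfn S N (\<lambda>x. \<exists>y\<in>Fn k. \<exists>t. P ((tcat N x y)(N + k := t)))" .
  show ?case
  proof (rule dfn_cong[OF h])
    fix x :: "nat \<Rightarrow> 'a" assume x: "x \<in> Fn N"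
    show "(\<exists>y\<in>Fn k. \<exists>t. P ((tcat N x y)(N + k := t))) = (\<exists>y\<in>Fn (Suc k). P (tcat N x y))"
    proof
      assume "\<exists>y\<in>Fn k. \<exists>t. P ((tcat N x y)(N + k := t))"
      then obtain y t where y: "y \<in> Fn k" "P ((tcat N x y)(N + k := t))" by blast
      have "(tcat N x y)(N + k := t) = tcat N x (y(k := t))" by (auto simp: tcat_def intro!: ext)
      moreover have "y(k := t) \<in> Fn (Suc k)" using y(1) by (auto simp: Fn_iff)
      ultimately show "\<exists>y\<in>Fn (Suc k). P (tcat N x y)" using y by metis
    next
      assume "\<exists>y\<in>Fn (Suc k). P (tcat N x y)"
      then obtain y where y: "y \<in> Fn (Suc k)" "P (tcat N x y)" by blast
      have "tcat N x y = (tcat N x (restrict y {..<k}))(N + k := y k)"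
        using y(1) by (auto simp: tcat_def Fn_iff intro!: ext)
      thus "\<exists>y\<in>Fn k. \<exists>t. P ((tcat N x y)(N + k := t))" using y by (metis restrict_Fn)
    qed
  qed
qed

lemma dfn_exB: "dfn S (N + k) P \<Longrightarrow> (\<And>x. x \<in> Fn N \<Longrightarrow> Q x = (\<exists>y\<in>Fn k. P (tcat N x y))) \<Longrightarrow> dfn S N Q"
  by (rule dfn_cong[OF dfn_exB1]) auto

lemma dfn_allB: "dfn S (N + k) P \<Longrightarrow> (\<And>x. x \<in> Fn N \<Longrightarrow> Q x = (\<forall>y\<in>Fn k. P (tcat N x y))) \<Longrightarrow> dfn S N Q"
  by (rule dfn_cong[OF dfn_not[OF dfn_exB1[OF dfn_not]]]) auto

lemma dfn_in: "A \<in> S k \<Longrightarrow> ofs + k \<le> N \<Longrightarrow> dfn S N (\<lambda>x. blk ofs k x \<in> A)"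
  unfolding blk_def by (rule atom) auto

lemma dfn_in2: assumes "A \<in> S (p + q)" "o1 + p \<le> N" "o2 + q \<le> N"
  shows "dfn S N (\<lambda>x. tcat p (blk o1 p x) (blk o2 q x) \<in> A)"
proof (rule dfn_cong[OF atom[OF assms(1), of "\<lambda>i. if i < p then o1 + i else o2 + (i - p)" N]])
  show "\<forall>i<p + q. (if i < p then o1 + i else o2 + (i - p)) < N" using assms by auto
  fix x :: "nat \<Rightarrow> 'a"
  have "(\<lambda>i\<in>{..<p + q}. x (if i < p then o1 + i else o2 + (i - p))) = tcat p (blk o1 p x) (blk o2 q x)"
    by (auto simp: tcat_def blk_def intro!: ext)
  thus "((\<lambda>i\<in>{..<p + q}. x (if i < p then o1 + i else o2 + (i - p))) \<in> A) = (tcat p (blk o1 p x) (blk o2 q x) \<in> A)" by simp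
qed

lemma dfn_in3: assumes "A \<in> S (p + q + r)" "o1 + p \<le> N" "o2 + q \<le> N" "o3 + r \<le> N"
  shows "dfn S N (\<lambda>x. tcat (p + q) (tcat p (blk o1 p x) (blk o2 q x)) (blk o3 r x) \<in> A)"
proof (rule dfn_cong[OF atom[OF assms(1), of "\<lambda>i. if i < p then o1 + i else if i < p + q then o2 + (i - p) else o3 + (i - p - q)" N]])
  show "\<forall>i<p + q + r. (if i < p then o1 + i else if i < p + q then o2 + (i - p) else o3 + (i - p - q)) < N" using assms by auto
  fix x :: "nat \<Rightarrow> 'a"
  have "(\<lambda>i\<in>{..<p + q + r}. x (if i < p then o1 + i else if i < p + q then o2 + (i - p) else o3 + (i - p - q)))
     = tcat (p + q) (tcat p (blk o1 p x) (blk o2 q x)) (blk o3 r x)"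
    by (auto simp: tcat_def blk_def diff_diff_add intro!: ext)
  thus "((\<lambda>i\<in>{..<p + q + r}. x (if i < p then o1 + i else if i < p + q then o2 + (i - p) else o3 + (i - p - q))) \<in> A) = (tcat (p + q) (tcat p (blk o1 p x) (blk o2 q x)) (blk o3 r x) \<in> A)" by simp
qed

lemma dfn_lt: assumes "i < N" "j < N" shows "dfn S N (\<lambda>x. x i < x j)"
proof (rule dfn_cong[OF atom[OF ltS, of "\<lambda>l. if l = 0 then i else j" N]])
  show "\<forall>l<2. (if l = 0 then i else j) < N" using assms by auto
  fix x :: "nat \<Rightarrow> 'a"
  show "((\<lambda>l\<in>{..<2}. x (if l = 0 then i else j)) \<in> {x \<in> Fn 2. x 0 < x 1}) = (x i < x j)"
    by (auto simp: Fn_iff)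
qed

lemma dfn_le: assumes "i < N" "j < N" shows "dfn S N (\<lambda>x. x i \<le> x j)"
  by (rule dfn_cong[OF dfn_not[OF dfn_lt[OF assms(2,1)]]]) auto

lemma dfn_plus: assumes "i < N" "j < N" "k < N" shows "dfn S N (\<lambda>x. x i + x j = x k)"
proof (rule dfn_cong[OF atom[OF plusS, of "\<lambda>l. if l = 0 then i else if l = 1 then j else k" N]])
  show "\<forall>l<3. (if l = 0 then i else if l = 1 then j else k) < N" using assms by auto
  fix x :: "nat \<Rightarrow> 'a"
  show "((\<lambda>l\<in>{..<3}. x (if l = 0 then i else if l = 1 then j else k)) \<in> {x \<in> Fn 3. x 0 + x 1 = x 2}) = (x i + x j = x k)"
    by (auto simp: Fn_iff)
qed

lemma dfn_const: assumes "i < N" shows "dfn S N (\<lambda>x. x i = c)"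
proof (rule dfn_cong[OF atom[OF constS, of "\<lambda>l. i" N]])
  show "\<forall>l<1. i < N" using assms by auto
  fix x :: "nat \<Rightarrow> 'a"
  show "((\<lambda>l\<in>{..<1}. x i) \<in> {x \<in> Fn 1. x 0 = c}) = (x i = c)"
    by (auto simp: Fn_iff)
qed

lemma dfn_eq: assumes "i < N" "j < N" shows "dfn S N (\<lambda>x. x i = x j)"
  using diag[OF assms] by (simp add: dfn_def)

lemma dfn_letc: assumes "dfn S (Suc N) P" "\<And>x. x \<in> Fn N \<Longrightarrow> Q x = P (x(N := c))"
  shows "dfn S N Q"
proof (rule dfn_ex[OF dfn_conj[OF dfn_const[of N "Suc N" c] assms(1)]])
  fix x :: "nat \<Rightarrow> 'a" assume "x \<in> Fn N"
  thus "Q x = (\<exists>t. (x(N := t)) N = c \<and> P (x(N := t)))" using assms(2) by auto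
qed simp

lemma dfn_letp: assumes "dfn S (Suc N) P" "i < N" "j < N" "\<And>x. x \<in> Fn N \<Longrightarrow> Q x = P (x(N := x i + x j))"
  shows "dfn S N Q"
proof (rule dfn_ex[OF dfn_conj[OF dfn_plus[of i "Suc N" j N] assms(1)]])
  fix x :: "nat \<Rightarrow> 'a" assume "x \<in> Fn N"
  thus "Q x = (\<exists>t. (x(N := t)) i + (x(N := t)) j = (x(N := t)) N \<and> P (x(N := t)))" using assms by auto
qed (use assms in auto)

lemma dfn_ball_lt: "(\<And>i. i < (p::nat) \<Longrightarrow> dfn S N (Q i)) \<Longrightarrow> dfn S N (\<lambda>x. \<forall>i<p. Q i x)"
proof (induction p)
  case 0 thus ?case using dfn_True by simp
next
  case (Suc p)
  have "dfn S N (\<lambda>x. (\<forall>i<p. Q i x) \<and> Q p x)" using Suc by (intro dfn_conj) auto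
  thus ?case by (rule dfn_cong) (auto simp: less_Suc_eq)
qed

end



definition inbox :: "nat \<Rightarrow> (nat \<Rightarrow> 'a::linordered_ab_group_add) \<Rightarrow> 'a \<Rightarrow> (nat \<Rightarrow> 'a) \<Rightarrow> bool" where
  "inbox p x e z \<longleftrightarrow> (\<forall>i<p. z i < x i + e \<and> x i < z i + e)"

lemma inbox_refl: "0 < e \<Longrightarrow> inbox p x e x" by (simp add: inbox_def)

lemma inbox_mono: assumes "inbox p x e z" "e \<le> e'" shows "inbox p x e' z"
  unfolding inbox_def
proof (intro allI impI conjI)
  fix i assume i: "i < p"
  have zi: "z i < x i + e" "x i < z i + e" using assms(1) i unfolding inbox_def by auto
  have "x i + e \<le> x i + e'" "z i + e \<le> z i + e'" using assms(2) by (simp_all add: add_left_mono)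
  thus "z i < x i + e'" "x i < z i + e'" using zi by (meson less_le_trans)+
qed

lemma all_less_add: "(\<forall>i<(p::nat)+k. P i) \<longleftrightarrow> (\<forall>i<p. P i) \<and> (\<forall>i<k. P (p + i))"
proof
  assume "\<forall>i<p+k. P i" thus "(\<forall>i<p. P i) \<and> (\<forall>i<k. P (p + i))" by auto
next
  assume h: "(\<forall>i<p. P i) \<and> (\<forall>i<k. P (p + i))"
  show "\<forall>i<p+k. P i"
  proof (intro allI impI)
    fix i assume i: "i < p + k"
    show "P i"
    proof (cases "i < p")
      case True with h show ?thesis by auto
    next
      case False
      define j where "j = i - p"
      have j: "i = p + j" using False by (simp add: j_def)
      with i have "j < k" by simp
      with h j show ?thesis by auto
    qed
  qed
qed

lemma inbox_tcat: "inbox (p+k) (tcat p x u) e (tcat p y v) \<longleftrightarrow> inbox p x e y \<and> inbox k u e v"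
  unfolding inbox_def all_less_add by (simp add: tcat_def)

lemma inbox_Suc: "inbox (Suc p) x e z \<longleftrightarrow> inbox p x e z \<and> z p < x p + e \<and> x p < z p + e"
  by (auto simp: inbox_def less_Suc_eq)

lemma topspace_topF[simp]: "topspace (topF n) = Fn n"
  by (simp add: topF_def Fn_def)

lemma open_pt:
  fixes V :: "'a::{linordered_ab_group_add,linorder_topology} set"
  assumes "open V" "t \<in> V" "(0::'a) < e0"
  shows "\<exists>e>0. \<forall>y. y < t + e \<and> t < y + e \<longrightarrow> y \<in> V"
proof -
  obtain b where b: "b < t" "{b<..t} \<subseteq> V" using open_left[OF assms(1,2), of "t - e0"] assms(3) by auto
  obtain c where c: "c > t" "{t..<c} \<subseteq> V" using open_right[OF assms(1,2), of "t + e0"] assms(3) by auto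
  show ?thesis
  proof (intro exI[of _ "min (t - b) (c - t)"] conjI allI impI)
    show "0 < min (t - b) (c - t)" using b c by simp
    fix y assume "y < t + min (t - b) (c - t) \<and> t < y + min (t - b) (c - t)"
    hence y: "y < t + min (t - b) (c - t)" "t < y + min (t - b) (c - t)" by auto
    have "t < y + (t - b)" using y(2) min.cobounded1[of "t - b" "c - t"] by (meson add_le_cancel_left less_le_trans)
    moreover have "y < t + (c - t)" using y(1) min.cobounded2[of "t - b" "c - t"] by (meson add_le_cancel_left less_le_trans)
    ultimately have "b < y" "y < c" by (simp_all add: algebra_simps)
    thus "y \<in> V" using b c by (cases "y \<le> t") auto
  qed
qed

context
  fixes e0 :: "'a::{linordered_ab_group_add,linorder_topology}"
  assumes e0: "0 < e0"
begin

lemma openin_boxD: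
  fixes U :: "(nat \<Rightarrow> 'a) set"
  assumes "openin (topF n) U" "x \<in> U"
  shows "\<exists>e>0. \<forall>z\<in>Fn n. inbox n x e z \<longrightarrow> z \<in> U"
proof -
  have "\<forall>x\<in>U. \<exists>V. finite {i \<in> {..<n}. V i \<noteq> topspace euclidean} \<and>
                 (\<forall>i \<in> {..<n}. openin euclidean (V i)) \<and> x \<in> Pi\<^sub>E {..<n} V \<and> Pi\<^sub>E {..<n} V \<subseteq> U"
    using assms(1) unfolding topF_def openin_product_topology_alt .
  hence "\<exists>V. finite {i \<in> {..<n}. V i \<noteq> topspace euclidean} \<and>
                 (\<forall>i \<in> {..<n}. openin euclidean (V i)) \<and> x \<in> Pi\<^sub>E {..<n} V \<and> Pi\<^sub>E {..<n} V \<subseteq> U"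
    using assms(2) by (rule bspec)
  then obtain V where V: "\<forall>i\<in>{..<n}. openin euclidean (V i)" "x \<in> PiE {..<n} V" "PiE {..<n} V \<subseteq> U"
    by (elim exE conjE) blast
  have h: "\<forall>i. \<exists>e. i < n \<longrightarrow> 0 < e \<and> (\<forall>y. y < x i + e \<and> x i < y + e \<longrightarrow> y \<in> V i)"
  proof
    fix i show "\<exists>e. i < n \<longrightarrow> 0 < e \<and> (\<forall>y. y < x i + e \<and> x i < y + e \<longrightarrow> y \<in> V i)"
    proof (cases "i < n")
      case True
      have "open (V i)" using V(1) True by simp
      moreover have "x i \<in> V i" using V(2) True unfolding PiE_iff by blast
      ultimately obtain e where "0 < e" "\<forall>y. y < x i + e \<and> x i < y + e \<longrightarrow> y \<in> V i"
        using open_pt[OF _ _ e0] by blast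
      thus ?thesis by blast
    next
      case False thus ?thesis by blast
    qed
  qed
  obtain ee where ee0: "\<forall>i. i < n \<longrightarrow> 0 < ee i \<and> (\<forall>y. y < x i + ee i \<and> x i < y + ee i \<longrightarrow> y \<in> V i)"
    using choice[OF h] by blast
  hence ee: "\<And>i. i < n \<Longrightarrow> 0 < ee i \<and> (\<forall>y. y < x i + ee i \<and> x i < y + ee i \<longrightarrow> y \<in> V i)" by blast
  define e where "e = Min (insert e0 (ee ` {..<n}))"
  have epos: "0 < e" unfolding e_def using ee e0 by (subst Min_gr_iff) auto
  have ele: "\<And>i. i < n \<Longrightarrow> e \<le> ee i" unfolding e_def by (intro Min_le) auto
  show ?thesis
  proof (intro exI[of _ e] conjI ballI impI epos)
    fix z assume z: "z \<in> Fn n" "inbox n x e z"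
    have "z \<in> PiE {..<n} V"
    unfolding PiE_iff
    proof (intro conjI ballI)
      fix i assume "i \<in> {..<n}"
      hence i: "i < n" by simp
      have zi: "z i < x i + e" "x i < z i + e" using z(2) i unfolding inbox_def by auto
      have "x i + e \<le> x i + ee i" "z i + e \<le> z i + ee i" using ele[OF i] by (simp_all add: add_left_mono)
      hence "z i < x i + ee i \<and> x i < z i + ee i" using zi by (meson less_le_trans)
      thus "z i \<in> V i" using ee[OF i] by blast
    next
      show "z \<in> extensional {..<n}" using z(1) by (simp add: Fn_def PiE_def)
    qed
    thus "z \<in> U" using V(3) by blast
  qed
qed

lemma openin_box: fixes x :: "nat \<Rightarrow> 'a" shows "0 < e \<Longrightarrow> openin (topF n) {z \<in> Fn n. inbox n x e z}"
proof -
  assume "0 < e"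
  have eq: "{z \<in> Fn n. inbox n x e z} = PiE {..<n} (\<lambda>i. {x i - e <..< x i + e})"
  proof (intro equalityI subsetI)
    fix z assume "z \<in> {z \<in> Fn n. inbox n x e z}"
    hence z: "z \<in> Fn n" "\<forall>i<n. z i < x i + e \<and> x i < z i + e" by (auto simp: inbox_def)
    show "z \<in> PiE {..<n} (\<lambda>i. {x i - e <..< x i + e})" unfolding PiE_iff
    proof (intro conjI ballI)
      fix i assume "i \<in> {..<n}"
      hence "z i < x i + e" "x i < z i + e" using z by auto
      thus "z i \<in> {x i - e <..< x i + e}" by (simp add: diff_less_eq)
    next
      show "z \<in> extensional {..<n}" using z(1) by (simp add: Fn_def PiE_def)
    qed
  next
    fix z assume z: "z \<in> PiE {..<n} (\<lambda>i. {x i - e <..< x i + e})"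
    have "z \<in> Fn n" using z by (simp add: Fn_def PiE_def)
    moreover have "inbox n x e z" unfolding inbox_def
    proof (intro allI impI)
      fix i assume "i < n"
      hence "z i \<in> {x i - e <..< x i + e}" using z by (auto simp: PiE_iff)
      thus "z i < x i + e \<and> x i < z i + e" by (simp add: diff_less_eq)
    qed
    ultimately show "z \<in> {z \<in> Fn n. inbox n x e z}" by blast
  qed
  show ?thesis unfolding eq topF_def
    apply (subst openin_PiE_gen)
    apply (rule disjI2, rule conjI)
     apply (rule finite_subset[of _ "{..<n}"]; force)
    unfolding open_openin[symmetric] by (intro ballI open_greaterThanLessThan)
qed

lemma closedin_boxD:
  fixes A :: "(nat \<Rightarrow> 'a) set"
  assumes "closedin (topF N) A" "x \<in> Fn N" "x \<notin> A"
  shows "\<exists>e>0. \<forall>z\<in>A. \<not> inbox N x e z"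
proof -
  have "openin (topF N) (Fn N - A)" "A \<subseteq> Fn N" using assms(1) by (auto simp: closedin_def)
  from openin_boxD[OF this(1)] assms obtain e where "0 < e" "\<forall>z\<in>Fn N. inbox N x e z \<longrightarrow> z \<in> Fn N - A" by blast
  thus ?thesis using \<open>A \<subseteq> Fn N\<close> by blast
qed

lemma closedin_boxI:
  fixes A :: "(nat \<Rightarrow> 'a) set"
  assumes "A \<subseteq> Fn N" "\<And>x. x \<in> Fn N \<Longrightarrow> x \<notin> A \<Longrightarrow> \<exists>e>0. \<forall>z\<in>A. \<not> inbox N x e z"
  shows "closedin (topF N) A"
proof -
  obtain ee where ee: "\<And>x. x \<in> Fn N \<Longrightarrow> x \<notin> A \<Longrightarrow> 0 < ee x \<and> (\<forall>z\<in>A. \<not> inbox N x (ee x) z)"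
    using assms(2) by metis
  have "Fn N - A = \<Union>((\<lambda>x. {z \<in> Fn N. inbox N x (ee x) z}) ` (Fn N - A))"
  proof (intro equalityI subsetI)
    fix x assume "x \<in> Fn N - A"
    thus "x \<in> \<Union>((\<lambda>x. {z \<in> Fn N. inbox N x (ee x) z}) ` (Fn N - A))" using ee inbox_refl by blast
  qed (use ee in blast)
  moreover have "openin (topF N) (\<Union>((\<lambda>x. {z \<in> Fn N. inbox N x (ee x) z}) ` (Fn N - A)))"
    using ee openin_box by (intro openin_Union) auto
  ultimately show ?thesis using assms(1) by (simp add: closedin_def)
qed

lemma openin_sub_boxI:
  fixes X :: "(nat \<Rightarrow> 'a) set"
  assumes "X \<subseteq> Fn n" "W \<subseteq> X" "\<And>x. x \<in> W \<Longrightarrow> \<exists>d>0. \<forall>y\<in>X. inbox n x d y \<longrightarrow> y \<in> W"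
  shows "openin (subtopology (topF n) X) W"
proof -
  have "\<forall>x. \<exists>d. x \<in> W \<longrightarrow> 0 < d \<and> (\<forall>y\<in>X. inbox n x d y \<longrightarrow> y \<in> W)"
    using assms(3) by blast
  from choice[OF this] obtain dd where dd0: "\<forall>x. x \<in> W \<longrightarrow> 0 < dd x \<and> (\<forall>y\<in>X. inbox n x (dd x) y \<longrightarrow> y \<in> W)"
    by blast
  hence dd: "\<And>x. x \<in> W \<Longrightarrow> 0 < dd x" "\<And>x y. x \<in> W \<Longrightarrow> y \<in> X \<Longrightarrow> inbox n x (dd x) y \<Longrightarrow> y \<in> W" by blast+
  define T where "T = \<Union>((\<lambda>x. {z \<in> Fn n. inbox n x (dd x) z}) ` W)"
  have "openin (topF n) T" unfolding T_def
  proof (rule openin_Union)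
    fix B assume "B \<in> (\<lambda>x. {z \<in> Fn n. inbox n x (dd x) z}) ` W"
    then obtain x where "x \<in> W" "B = {z \<in> Fn n. inbox n x (dd x) z}" by blast
    thus "openin (topF n) B" using openin_box dd(1) by blast
  qed
  moreover have "W = T \<inter> X"
  proof (intro equalityI subsetI)
    fix x assume x: "x \<in> W"
    hence "x \<in> X" using assms(2) by blast
    moreover have "x \<in> Fn n" using \<open>x \<in> X\<close> assms(1) by blast
    moreover have "inbox n x (dd x) x" using inbox_refl dd(1)[OF x] by blast
    ultimately show "x \<in> T \<inter> X" using x unfolding T_def by blast
  next
    fix y assume "y \<in> T \<inter> X"
    then obtain x where "x \<in> W" "inbox n x (dd x) y" "y \<in> X" unfolding T_def by blast
    thus "y \<in> W" using dd(2) by blast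
  qed
  ultimately show ?thesis unfolding openin_subtopology by blast
qed

lemma openin_sub_boxD:
  fixes X :: "(nat \<Rightarrow> 'a) set"
  assumes "X \<subseteq> Fn n" "openin (subtopology (topF n) X) W" "x \<in> W"
  shows "\<exists>d>0. \<forall>y\<in>X. inbox n x d y \<longrightarrow> y \<in> W"
proof -
  obtain T where T: "openin (topF n) T" "W = T \<inter> X" using assms(2) unfolding openin_subtopology by blast
  have "x \<in> T" using assms(3) T(2) by blast
  from openin_boxD[OF T(1) this] obtain d where d: "0 < d" "\<forall>z\<in>Fn n. inbox n x d z \<longrightarrow> z \<in> T" by blast
  show ?thesis
  proof (intro exI[of _ d] conjI ballI impI d(1))
    fix y assume y: "y \<in> X" "inbox n x d y"
    hence "y \<in> T" using d(2) assms(1) by blast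
    thus "y \<in> W" using T(2) y(1) by blast
  qed
qed

lemma cont_boxD:
  fixes X :: "(nat \<Rightarrow> 'a) set" and Y :: "(nat \<Rightarrow> 'a) set"
  assumes X: "X \<subseteq> Fn p" and Y: "Y \<subseteq> Fn q"
    and c: "continuous_map (subtopology (topF p) X) (subtopology (topF q) Y) h"
    and x: "x \<in> X" and e: "0 < e"
  shows "\<exists>d>0. \<forall>y\<in>X. inbox p x d y \<longrightarrow> inbox q (h x) e (h y)"
proof -
  have tX: "topspace (subtopology (topF p) X) = X" using X by auto
  have tY: "topspace (subtopology (topF q) Y) = Y" using Y by auto
  have hY: "\<And>y. y \<in> X \<Longrightarrow> h y \<in> Y" using c unfolding continuous_map_def tX tY by blast
  let ?U = "{z \<in> Fn q. inbox q (h x) e z} \<inter> Y"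
  have "openin (subtopology (topF q) Y) ?U" unfolding openin_subtopology using openin_box[OF e] by blast
  hence "openin (subtopology (topF p) X) {y \<in> X. h y \<in> ?U}" using c unfolding continuous_map_def tX tY by blast
  moreover have "x \<in> {y \<in> X. h y \<in> ?U}" using x hY Y inbox_refl[OF e] by blast
  ultimately obtain d where d: "0 < d" "\<forall>y\<in>X. inbox p x d y \<longrightarrow> y \<in> {y \<in> X. h y \<in> ?U}"
    using openin_sub_boxD[OF X] by blast
  show ?thesis
  proof (intro exI[of _ d] conjI ballI impI d(1))
    fix y assume "y \<in> X" "inbox p x d y"
    hence "h y \<in> ?U" using d(2) by blast
    thus "inbox q (h x) e (h y)" by blast
  qed
qed

lemma cont_realD:
  fixes f :: "(nat \<Rightarrow> 'a) \<Rightarrow> 'a"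
  assumes X: "X \<subseteq> Fn p" and c: "continuous_map (subtopology (topF p) X) euclidean f"
    and x: "x \<in> X" and e: "0 < e"
  shows "\<exists>d>0. \<forall>y\<in>X. inbox p x d y \<longrightarrow> f y < f x + e \<and> f x < f y + e"
proof -
  have tX: "topspace (subtopology (topF p) X) = X" using X by auto
  let ?U = "{f x - e <..< f x + e}"
  have "openin (subtopology (topF p) X) {y \<in> X. f y \<in> ?U}" using c unfolding continuous_map_def tX
    by (metis open_greaterThanLessThan open_openin)
  moreover have "x \<in> {y \<in> X. f y \<in> ?U}" using x e by auto
  ultimately obtain d where d: "0 < d" "\<forall>y\<in>X. inbox p x d y \<longrightarrow> y \<in> {y \<in> X. f y \<in> ?U}"
    using openin_sub_boxD[OF X] by blast
  show ?thesis
  proof (intro exI[of _ d] conjI ballI impI d(1))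
    fix y assume "y \<in> X" "inbox p x d y"
    hence "f y \<in> ?U" using d(2) by blast
    thus "f y < f x + e" "f x < f y + e" by (simp_all add: diff_less_eq)
  qed
qed

lemma cont_realI:
  fixes f :: "(nat \<Rightarrow> 'a) \<Rightarrow> 'a"
  assumes X: "X \<subseteq> Fn p"
    and h: "\<And>x U. x \<in> X \<Longrightarrow> open U \<Longrightarrow> f x \<in> U \<Longrightarrow> \<exists>d>0. \<forall>y\<in>X. inbox p x d y \<longrightarrow> f y \<in> U"
  shows "continuous_map (subtopology (topF p) X) euclidean f"
proof -
  have tX: "topspace (subtopology (topF p) X) = X" using X by auto
  show ?thesis unfolding continuous_map_def tX
  proof (intro conjI allI impI)
    fix U :: "'a set" assume "openin euclidean U"
    hence "open U" by simp
    show "openin (subtopology (topF p) X) {x \<in> X. f x \<in> U}"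
      by (rule openin_sub_boxI[OF X]) (use h \<open>open U\<close> in auto)
  qed auto
qed

end



lemma hb1:
  fixes D :: "'a::linorder \<Rightarrow> bool"
  assumes ab: "a \<le> b"
    and below: "\<And>t. t < a \<Longrightarrow> D t"
    and loc: "\<And>u. a \<le> u \<Longrightarrow> u \<le> b \<Longrightarrow> \<exists>l r. l < u \<and> u < r \<and> (\<forall>t1 t2. l \<le> t1 \<longrightarrow> t2 < r \<longrightarrow> D t1 \<longrightarrow> D t2)"
    and sup: "{t. t \<le> b \<and> D t} \<noteq> {} \<Longrightarrow> \<exists>s. is_sup {t. t \<le> b \<and> D t} s"
  shows "D b"
proof -
  let ?Y = "{t. t \<le> b \<and> D t}"
  obtain l0 r0 where lr0: "l0 < a" "a < r0" "\<forall>t1 t2. l0 \<le> t1 \<longrightarrow> t2 < r0 \<longrightarrow> D t1 \<longrightarrow> D t2"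
    using loc[OF order.refl ab] by blast
  have Da: "D a" using lr0 below[OF lr0(1)] by blast
  hence "a \<in> ?Y" using ab by blast
  then obtain s where s: "is_sup ?Y s" using sup by blast
  have sub: "\<And>y. y \<in> ?Y \<Longrightarrow> y \<le> s" and least: "\<And>u. (\<forall>y\<in>?Y. y \<le> u) \<Longrightarrow> s \<le> u"
    using s unfolding is_sup_def by blast+
  have sb: "s \<le> b" using least by blast
  have as: "a \<le> s" using sub \<open>a \<in> ?Y\<close> by blast
  obtain l r where lr: "l < s" "s < r" "\<forall>t1 t2. l \<le> t1 \<longrightarrow> t2 < r \<longrightarrow> D t1 \<longrightarrow> D t2"
    using loc[OF as sb] by blast
  have "\<exists>t1\<in>?Y. \<not> t1 \<le> l"
  proof (rule ccontr)
    assume "\<not> (\<exists>t1\<in>?Y. \<not> t1 \<le> l)"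
    hence "s \<le> l" using least by blast
    thus False using lr(1) by simp
  qed
  then obtain t1 where t1: "t1 \<in> ?Y" "l \<le> t1" by (meson linear)
  have allD: "\<And>t2. t2 < r \<Longrightarrow> D t2" using lr(3) t1 by blast
  show "D b"
  proof (cases "b < r")
    case True thus ?thesis using allD by blast
  next
    case False
    hence rb: "r \<le> b" by simp
    show ?thesis
    proof (cases "\<exists>t2. s < t2 \<and> t2 < r")
      case True
      then obtain t2 where t2: "s < t2" "t2 < r" by blast
      have "t2 \<in> ?Y" using allD[OF t2(2)] t2(2) rb by simp
      hence "t2 \<le> s" using sub by blast
      thus ?thesis using t2(1) by simp
    next
      case False
      have Ds: "D s" using allD lr(2) by blast
      obtain l' r' where lr': "l' < r" "r < r'" "\<forall>t1 t2. l' \<le> t1 \<longrightarrow> t2 < r' \<longrightarrow> D t1 \<longrightarrow> D t2"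
        using loc[of r] as lr(2) rb by force
      have "l' \<le> s" using False lr'(1) by (meson not_le)
      hence "D r" using lr'(2,3) Ds by blast
      hence "r \<in> ?Y" using rb by simp
      hence "r \<le> s" using sub by blast
      thus ?thesis using lr(2) by simp
    qed
  qed
qed

lemma tcat_lo[simp]: "i < N \<Longrightarrow> tcat N x y i = x i" by (simp add: tcat_def)
lemma tcat_hi[simp]: "tcat N x y (N + i) = y i" by (simp add: tcat_def)
lemma blk_tcat_hi[simp]: "y \<in> Fn k \<Longrightarrow> blk N k (tcat N x y) = y"
  by (rule ext) (auto simp: blk_def Fn_iff)
lemma blk_upd_hi[simp]: "o1 + k \<le> M \<Longrightarrow> blk o1 k (v(M := t)) = blk o1 k v"
  by (rule ext) (auto simp: blk_def)
lemma blk_apply[simp]: "i < k \<Longrightarrow> blk o1 k v i = v (o1 + i)" by (simp add: blk_def)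
lemma tone_Fn[simp]: "tone a \<in> Fn 1" by (simp add: tone_def Fn_iff)
lemma blk1: "blk o1 1 v = tone (v o1)" by (rule ext) (simp add: blk_def tone_def)
lemma tcat_Fn: "x \<in> Fn p \<Longrightarrow> y \<in> Fn q \<Longrightarrow> tcat p x y \<in> Fn (p + q)"
  by (auto simp: tcat_def Fn_iff)
lemma tcat_inj: assumes "x \<in> Fn p" "x' \<in> Fn p" "y \<in> Fn q" "y' \<in> Fn q" "tcat p x y = tcat p x' y'"
  shows "x = x' \<and> y = y'"
proof
  show "x = x'"
  proof
    fix i show "x i = x' i"
    proof (cases "i < p")
      case True thus ?thesis using fun_cong[OF assms(5), of i] by simp
    next
      case False thus ?thesis using assms(1,2) by (simp add: Fn_iff)
    qed
  qed
  show "y = y'"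
  proof
    fix i show "y i = y' i" using fun_cong[OF assms(5), of "p + i"] by simp
  qed
qed
lemma blk_tcat_lo[simp]: "o1 + k \<le> N \<Longrightarrow> blk o1 k (tcat N x y) = blk o1 k x"
  by (rule ext) (auto simp: blk_def)
lemma restrict_tcat[simp]: "restrict (tcat N x y) {..<N} = restrict x {..<N}"
  by (rule ext) auto
lemma blk0: "blk 0 k x = restrict x {..<k}" by (rule ext) (simp add: blk_def)

context ES
begin

lemma tone_inj: "tone a = tone b \<Longrightarrow> a = b"
  by (metis lessThan_iff restrict_apply' tone_def zero_less_one)

lemma dfn_graph:
  assumes "definable_fun S N A f" "A \<subseteq> Fn N" "o1 + N \<le> M" "j < M"
  shows "dfn S M (\<lambda>v. blk o1 N v \<in> A \<and> f (blk o1 N v) = v j)"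
proof -
  let ?G = "{tcat N x (tone (f x)) | x. x \<in> A}"
  have G: "?G \<in> S (N + 1)" using assms(1) unfolding definable_fun_def definable_map_def by blast
  show ?thesis
  proof (rule dfn_cong[OF dfn_in2[OF G assms(3), of j]])
    show "j + 1 \<le> M" using assms(4) by simp
    fix v :: "nat \<Rightarrow> 'a"
    have b1: "blk j 1 v = tone (v j)" by (rule blk1)
    show "(tcat N (blk o1 N v) (blk j 1 v) \<in> ?G) = (blk o1 N v \<in> A \<and> f (blk o1 N v) = v j)"
      unfolding b1
    proof
      assume "tcat N (blk o1 N v) (tone (v j)) \<in> ?G"
      then obtain x where x: "x \<in> A" "tcat N (blk o1 N v) (tone (v j)) = tcat N x (tone (f x))" by blast
      have "x \<in> Fn N" using x(1) assms(2) by blast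
      have "blk o1 N v = x \<and> tone (v j) = tone (f x)"
        by (rule tcat_inj[OF blk_Fn \<open>x \<in> Fn N\<close> tone_Fn tone_Fn x(2)])
      thus "blk o1 N v \<in> A \<and> f (blk o1 N v) = v j" using x(1) tone_inj by metis
    next
      assume h: "blk o1 N v \<in> A \<and> f (blk o1 N v) = v j"
      thus "tcat N (blk o1 N v) (tone (v j)) \<in> ?G" by (metis (mono_tags, lifting) mem_Collect_eq)
    qed
  qed
qed

lemma dfn_ex': "dfn S M P \<Longrightarrow> M = Suc N \<Longrightarrow> (\<And>x. x \<in> Fn N \<Longrightarrow> Q x = (\<exists>t. P (x(N := t)))) \<Longrightarrow> dfn S N Q"
  using dfn_ex by blast
lemma dfn_all': "dfn S M P \<Longrightarrow> M = Suc N \<Longrightarrow> (\<And>x. x \<in> Fn N \<Longrightarrow> Q x = (\<forall>t. P (x(N := t)))) \<Longrightarrow> dfn S N Q"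
  using dfn_all by blast

lemma dfn_c_lt: "j < M \<Longrightarrow> dfn S M (\<lambda>v. c < v j)"
  by (rule dfn_letc[OF dfn_lt[of M "Suc M" j], where c=c]) auto

lemma dfn_lt_c: "j < M \<Longrightarrow> dfn S M (\<lambda>v. v j < c)"
  by (rule dfn_letc[OF dfn_lt[of j "Suc M" M], where c=c]) auto

lemma dfn_le_c: "j < M \<Longrightarrow> dfn S M (\<lambda>v. v j \<le> c)"
  by (rule dfn_cong[OF dfn_not[OF dfn_c_lt[of j M c]]]) auto

lemma dfn_lt_cplus: assumes "j < M" "k < M" shows "dfn S M (\<lambda>v. v j < c + v k)"
proof (rule dfn_letc[where c=c])
  show "dfn S (Suc M) (\<lambda>v. v j < v M + v k)"
    by (rule dfn_letp[OF dfn_lt[of j "Suc (Suc M)" "Suc M"], of M k]) (use assms in auto)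
qed (use assms in auto)

lemma dfn_c_lt_plus: assumes "j < M" "k < M" shows "dfn S M (\<lambda>v. c < v j + v k)"
  by (rule dfn_letp[OF dfn_c_lt[of M "Suc M"], of j k]) (use assms in auto)

lemma dfn_inbox:
  assumes "p \<le> K" "o1 + K \<le> M" "ie < M"
  shows "dfn S M (\<lambda>v. inbox p x (v ie) (blk o1 K v))"
proof -
  have "dfn S M (\<lambda>v. \<forall>i<p. v (o1 + i) < x i + v ie \<and> x i < v (o1 + i) + v ie)"
    by (rule dfn_ball_lt, rule dfn_conj) (use assms in \<open>auto intro!: dfn_lt_cplus dfn_c_lt_plus\<close>)
  thus ?thesis by (rule dfn_cong) (use assms in \<open>auto simp: inbox_def\<close>)
qed

end



locale TUBE = ES S for S :: "nat \<Rightarrow> (nat \<Rightarrow> 'a::{linordered_ab_group_add,linorder_topology}) set set" +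
  fixes N :: nat and A :: "(nat \<Rightarrow> 'a) set" and f :: "(nat \<Rightarrow> 'a) \<Rightarrow> 'a" and R :: "'a \<Rightarrow> bool"
    and a b :: 'a and p0 :: nat and e0 :: 'a
  assumes dc: "definably_complete S" and e0: "0 < e0"
    and AS: "A \<in> S N" and Acl: "closedin (topF N) A" and fdef: "definable_fun S N A f"
    and Rdef: "{w \<in> Fn 1. R (w 0)} \<in> S 1" and Rex: "\<exists>c. R c"
    and Rmin: "\<And>c1 c2. R c1 \<Longrightarrow> R c2 \<Longrightarrow> R (min c1 c2)"
    and ab: "a \<le> b" and bnd: "\<And>z i. z \<in> A \<Longrightarrow> p0 \<le> i \<Longrightarrow> i < N \<Longrightarrow> a \<le> z i \<and> z i \<le> b"
begin

lemma AF: "A \<subseteq> Fn N" using sub[OF AS] .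

definition locgood where "locgood y \<longleftrightarrow> (\<exists>e>0. \<exists>c. R c \<and> (\<forall>z\<in>A. inbox N y e z \<longrightarrow> c \<le> f z))"

lemma dfnR: "j < M \<Longrightarrow> dfn S M (\<lambda>v. R (v j))"
proof (rule dfn_cong[OF atom[OF Rdef, of "\<lambda>_. j" M]])
  fix v :: "nat \<Rightarrow> 'a"
  show "((\<lambda>i\<in>{..<1}. v j) \<in> {w \<in> Fn 1. R (w 0)}) = R (v j)" by (simp add: Fn_iff)
qed simp

lemma Ddef:
  assumes "p < N"
  shows "dfn S 1 (\<lambda>w. w 0 \<le> b \<and> (\<exists>e>0. \<exists>c. R c \<and> (\<forall>z\<in>A. inbox p x e z \<and> z p \<le> w 0 \<longrightarrow> c \<le> f z)))"
proof -
  have P4: "dfn S (Suc (3 + N)) (\<lambda>v. (blk 3 N v \<in> A \<and> f (blk 3 N v) = v (3+N)) \<and> inbox p x (v 1) (blk 3 N v) \<and> v (3+p) \<le> v 0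
      \<longrightarrow> v 2 \<le> v (3+N))"
    using assms by (intro dfn_imp dfn_conj dfn_graph[OF fdef AF] dfn_inbox dfn_le) auto
  have P3: "dfn S (3 + N) (\<lambda>v. blk 3 N v \<in> A \<and> inbox p x (v 1) (blk 3 N v) \<and> v (3+p) \<le> v 0 \<longrightarrow> v 2 \<le> f (blk 3 N v))"
  proof (rule dfn_all[OF P4])
    fix v :: "nat \<Rightarrow> 'a" assume "v \<in> Fn (3 + N)"
    have e1: "(v(3 + N := t)) 1 = v 1" "(v(3 + N := t)) 0 = v 0" "(v(3 + N := t)) 2 = v 2"
      "(v(3 + N := t)) (3 + p) = v (3 + p)" "(v(3 + N := t)) (3 + N) = t" for t using assms by auto
    show "(blk 3 N v \<in> A \<and> inbox p x (v 1) (blk 3 N v) \<and> v (3 + p) \<le> v 0 \<longrightarrow> v 2 \<le> f (blk 3 N v)) =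
         (\<forall>t. (blk 3 N (v(3 + N := t)) \<in> A \<and> f (blk 3 N (v(3 + N := t))) = (v(3 + N := t)) (3 + N)) \<and>
              inbox p x ((v(3 + N := t)) 1) (blk 3 N (v(3 + N := t))) \<and> (v(3 + N := t)) (3 + p) \<le> (v(3 + N := t)) 0 \<longrightarrow>
              (v(3 + N := t)) 2 \<le> (v(3 + N := t)) (3 + N))"
      unfolding e1 blk_upd_hi[OF order.refl] by blast
  qed
  have P2: "dfn S 3 (\<lambda>v. \<forall>z\<in>A. inbox p x (v 1) z \<and> z p \<le> v 0 \<longrightarrow> v 2 \<le> f z)"
  proof (rule dfn_allB[OF P3])
    fix v :: "nat \<Rightarrow> 'a" assume "v \<in> Fn 3"
    have e1: "tcat 3 v z 1 = v 1" "tcat 3 v z 0 = v 0" "tcat 3 v z 2 = v 2" "tcat 3 v z (3 + p) = z p" for z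
      by auto
    have e2: "z \<in> Fn N \<Longrightarrow> blk 3 N (tcat 3 v z) = z" for z by simp
    show "(\<forall>z\<in>A. inbox p x (v 1) z \<and> z p \<le> v 0 \<longrightarrow> v 2 \<le> f z) =
          (\<forall>y\<in>Fn N. blk 3 N (tcat 3 v y) \<in> A \<and> inbox p x (tcat 3 v y 1) (blk 3 N (tcat 3 v y)) \<and>
                     tcat 3 v y (3 + p) \<le> tcat 3 v y 0 \<longrightarrow> tcat 3 v y 2 \<le> f (blk 3 N (tcat 3 v y)))"
      unfolding e1 using e2 AF by auto
  qed
  have P2': "dfn S 3 (\<lambda>v. R (v 2) \<and> (\<forall>z\<in>A. inbox p x (v 1) z \<and> z p \<le> v 0 \<longrightarrow> v 2 \<le> f z))"
    by (rule dfn_conj[OF dfnR P2]) simp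
  have P1a: "dfn S 2 (\<lambda>v. \<exists>c. R c \<and> (\<forall>z\<in>A. inbox p x (v 1) z \<and> z p \<le> v 0 \<longrightarrow> c \<le> f z))"
  proof (rule dfn_ex'[OF P2'])
    fix v :: "nat \<Rightarrow> 'a" assume "v \<in> Fn 2"
    show "(\<exists>c. R c \<and> (\<forall>z\<in>A. inbox p x (v 1) z \<and> z p \<le> v 0 \<longrightarrow> c \<le> f z)) =
          (\<exists>t. R ((v(2 := t)) 2) \<and> (\<forall>z\<in>A. inbox p x ((v(2 := t)) 1) z \<and> z p \<le> (v(2 := t)) 0 \<longrightarrow> (v(2 := t)) 2 \<le> f z))"
      by simp
  qed simp
  have P1: "dfn S 2 (\<lambda>v. 0 < v 1 \<and> (\<exists>c. R c \<and> (\<forall>z\<in>A. inbox p x (v 1) z \<and> z p \<le> v 0 \<longrightarrow> c \<le> f z)))"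
    by (rule dfn_conj[OF dfn_c_lt P1a]) simp
  have P0: "dfn S 1 (\<lambda>w. \<exists>e>0. \<exists>c. R c \<and> (\<forall>z\<in>A. inbox p x e z \<and> z p \<le> w 0 \<longrightarrow> c \<le> f z))"
  proof (rule dfn_ex'[OF P1])
    fix v :: "nat \<Rightarrow> 'a" assume "v \<in> Fn 1"
    show "(\<exists>e>0. \<exists>c. R c \<and> (\<forall>z\<in>A. inbox p x e z \<and> z p \<le> v 0 \<longrightarrow> c \<le> f z)) =
       (\<exists>t. 0 < (v(1 := t)) 1 \<and> (\<exists>c. R c \<and> (\<forall>z\<in>A. inbox p x ((v(1 := t)) 1) z \<and> z p \<le> (v(1 := t)) 0 \<longrightarrow> c \<le> f z)))"
      by simp
  qed simp
  show ?thesis by (rule dfn_conj[OF dfn_le_c P0]) simp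
qed


lemma inbox_agree: "(\<forall>i<p. x' i = x i) \<Longrightarrow> inbox p x' e z = inbox p x e z" by (simp add: inbox_def)

lemma tube:
  "p + k = N \<Longrightarrow> p0 \<le> p \<Longrightarrow> x \<in> Fn p \<Longrightarrow> (\<forall>y\<in>A. restrict y {..<p} = x \<longrightarrow> locgood y)
   \<Longrightarrow> \<exists>e>0. \<exists>c. R c \<and> (\<forall>z\<in>A. inbox p x e z \<longrightarrow> c \<le> f z)"
proof (induction k arbitrary: p x)
  case 0
  hence pN: "p = N" by simp
  show ?case
  proof (cases "x \<in> A")
    case True
    have "restrict x {..<p} = x" using 0(3) Fn_restrict_eq by blast
    hence "locgood x" using 0(4) True by blast
    thus ?thesis unfolding locgood_def pN .
  next
    case False
    have xF: "x \<in> Fn N" using 0(3) pN by simp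
    obtain e where "0 < e" "\<forall>z\<in>A. \<not> inbox N x e z" using closedin_boxD[OF e0 Acl xF False] by blast
    moreover obtain c where "R c" using Rex by blast
    ultimately show ?thesis unfolding pN by blast
  qed
next
  case (Suc k)
  have pN: "p < N" using Suc.prems(1) by simp
  define D where "D t \<longleftrightarrow> (\<exists>e>0. \<exists>c. R c \<and> (\<forall>z\<in>A. inbox p x e z \<and> z p \<le> t \<longrightarrow> c \<le> f z))" for t
  have "D b"
  proof (rule hb1[OF ab])
    show "D t" if "t < a" for t
    proof -
      obtain c where "R c" using Rex by blast
      moreover have "\<forall>z\<in>A. inbox p x e0 z \<and> z p \<le> t \<longrightarrow> c \<le> f z"
      proof (intro ballI impI)
        fix z assume z: "z \<in> A" "inbox p x e0 z \<and> z p \<le> t"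
        have "a \<le> z p" using bnd[OF z(1), of p] Suc.prems(2) pN by blast
        hence False using z(2) that by (meson le_less_trans not_le)
        thus "c \<le> f z" ..
      qed
      ultimately show ?thesis unfolding D_def using e0 by blast
    qed
  next
    fix u assume u: "a \<le> u" "u \<le> b"
    let ?x' = "x(p := u)"
    have x'F: "?x' \<in> Fn (Suc p)" using Suc.prems(3) by (auto simp: Fn_iff)
    have hyp: "\<forall>y\<in>A. restrict y {..<Suc p} = ?x' \<longrightarrow> locgood y"
    proof (intro ballI impI)
      fix y assume y: "y \<in> A" "restrict y {..<Suc p} = ?x'"
      have "restrict y {..<p} = x"
      proof
        fix i show "restrict y {..<p} i = x i"
        proof (cases "i < p")
          case True thus ?thesis using fun_cong[OF y(2), of i] by simp
        next
          case False thus ?thesis using Suc.prems(3) by (simp add: Fn_iff)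
        qed
      qed
      thus "locgood y" using Suc.prems(4) y(1) by blast
    qed
    have "Suc p + k = N" using Suc.prems(1) by simp
    moreover have "p0 \<le> Suc p" using Suc.prems(2) by simp
    ultimately obtain e c where ec: "0 < e" "R c" "\<forall>z\<in>A. inbox (Suc p) ?x' e z \<longrightarrow> c \<le> f z"
      using Suc.IH[of "Suc p" ?x'] x'F hyp by blast
    show "\<exists>l r. l < u \<and> u < r \<and> (\<forall>t1 t2. l \<le> t1 \<longrightarrow> t2 < r \<longrightarrow> D t1 \<longrightarrow> D t2)"
    proof (intro exI conjI allI impI)
      show "u - e < u" "u < u + e" using ec(1) by simp_all
      fix t1 t2 assume t: "u - e \<le> t1" "t2 < u + e" "D t1"
      then obtain e1 c1 where ec1: "0 < e1" "R c1" "\<forall>z\<in>A. inbox p x e1 z \<and> z p \<le> t1 \<longrightarrow> c1 \<le> f z"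
        unfolding D_def by blast
      show "D t2" unfolding D_def
      proof (intro exI conjI ballI impI)
        show "0 < min e e1" using ec(1) ec1(1) by simp
        show "R (min c c1)" using Rmin ec(2) ec1(2) .
        fix z assume z: "z \<in> A" "inbox p x (min e e1) z \<and> z p \<le> t2"
        show "min c c1 \<le> f z"
        proof (cases "z p \<le> t1")
          case True
          have "inbox p x e1 z" using z(2) inbox_mono[of p x "min e e1" z e1] by simp
          hence "c1 \<le> f z" using ec1(3) z(1) True by blast
          thus ?thesis by (simp add: min.coboundedI2)
        next
          case False
          have "inbox p x e z" using z(2) inbox_mono[of p x "min e e1" z e] by simp
          hence "inbox p ?x' e z" using inbox_agree[of p ?x' x e z] by simp
          moreover have "z p < u + e" using z(2) t(2) by (meson order.strict_trans1)
          moreover have "u - e < z p" using t(1) False by (meson not_le order.strict_trans1)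
          hence "u < z p + e" by (simp add: diff_less_eq)
          ultimately have "inbox (Suc p) ?x' e z" by (simp add: inbox_Suc)
          hence "c \<le> f z" using ec(3) z(1) by blast
          thus ?thesis by (simp add: min.coboundedI1)
        qed
      qed
    qed
  next
    assume ne: "{t. t \<le> b \<and> D t} \<noteq> {}"
    have Ds: "{w \<in> Fn 1. w 0 \<le> b \<and> D (w 0)} \<in> S 1" using Ddef[OF pN, of x] unfolding dfn_def D_def .
    have img: "(\<lambda>x. x 0) ` {w \<in> Fn 1. w 0 \<le> b \<and> D (w 0)} = {t. t \<le> b \<and> D t}"
    proof (intro equalityI subsetI)
      fix t assume "t \<in> {t. t \<le> b \<and> D t}"
      moreover have "tone t \<in> Fn 1" "tone t 0 = t" by (simp_all add: tone_def)
      ultimately show "t \<in> (\<lambda>x. x 0) ` {w \<in> Fn 1. w 0 \<le> b \<and> D (w 0)}" by (metis (mono_tags, lifting) image_eqI mem_Collect_eq)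
    qed auto
    have h: "let B = (\<lambda>x. x 0) ` {w \<in> Fn 1. w 0 \<le> b \<and> D (w 0)} in
        (B \<noteq> {} \<and> (\<exists>b. \<forall>y\<in>B. y \<le> b) \<longrightarrow> Ex (is_sup B)) \<and>
          (B \<noteq> {} \<and> (\<exists>b. Ball B ((\<le>) b)) \<longrightarrow> Ex (is_inf B))"
      using bspec[OF dc[unfolded definably_complete_def] Ds] .
    have "\<exists>bb. \<forall>y\<in>{t. t \<le> b \<and> D t}. y \<le> bb" by blast
    thus "\<exists>s. is_sup {t. t \<le> b \<and> D t} s" using h unfolding img Let_def using ne by blast
  qed
  then obtain e c where "0 < e" "R c" "\<forall>z\<in>A. inbox p x e z \<and> z p \<le> b \<longrightarrow> c \<le> f z" unfolding D_def by blast
  moreover have "\<forall>z\<in>A. z p \<le> b" using bnd Suc.prems(2) pN by blast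
  ultimately show ?case by blast
qed

end



lemma blk_blk[simp]: "o1 + k \<le> K \<Longrightarrow> blk o1 k (blk o2 K v) = blk (o2 + o1) k v"
  by (rule ext) (auto simp: blk_def add.assoc)

lemma tcat_split: "z \<in> Fn (p + q) \<Longrightarrow> tcat p (blk 0 p z) (blk p q z) = z"
  by (rule ext) (auto simp: tcat_def blk_def Fn_iff)

lemma blk0_tcat[simp]: "x \<in> Fn p \<Longrightarrow> blk 0 p (tcat p x y) = x"
  by (simp add: blk0 Fn_restrict_eq)

lemma tfst_tcat[simp]: "x \<in> Fn p \<Longrightarrow> tfst p (tcat p x y) = x"
  by (simp add: tfst_def Fn_restrict_eq)

lemma tsnd_tcat[simp]: "y \<in> Fn q \<Longrightarrow> tsnd p q (tcat p x y) = y"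
  by (rule ext) (auto simp: tsnd_def Fn_iff)

lemma blk0_Fn[simp]: "x \<in> Fn p \<Longrightarrow> blk 0 p x = x"
  by (simp add: blk0 Fn_restrict_eq)

lemma tcat_at[simp]: "tcat N x y N = y 0" by (simp add: tcat_def)
lemma blk1'[simp]: "blk o1 (Suc 0) v = tone (v o1)" using blk1[of o1 v] by simp
lemma tone_Fn'[simp]: "tone a \<in> Fn (Suc 0)" using tone_Fn[of a] by simp
lemma tone0[simp]: "tone a 0 = a" by (simp add: tone_def)

lemma inbox_lo: "p \<le> K \<Longrightarrow> inbox p x e (tcat K y w) = inbox p x e y"
  by (simp add: inbox_def)

locale MAIN = ES S for S :: "nat \<Rightarrow> (nat \<Rightarrow> 'a::{linordered_ab_group_add,linorder_topology}) set set" +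
  fixes Gr :: "(nat \<Rightarrow> 'a) monoid" and m n :: nat and X :: "(nat \<Rightarrow> 'a) set"
    and act :: "(nat \<Rightarrow> 'a) \<Rightarrow> (nat \<Rightarrow> 'a) \<Rightarrow> (nat \<Rightarrow> 'a)" and \<phi> :: "(nat \<Rightarrow> 'a) \<Rightarrow> 'a"
    and e0 a b :: 'a
  assumes dc: "definably_complete S"
    and tg: "definable_top_group S m Gr"
    and Gcl: "closedin (topF m) (carrier Gr)"
    and Gbnd: "\<And>g i. g \<in> carrier Gr \<Longrightarrow> i < m \<Longrightarrow> a \<le> g i \<and> g i \<le> b"
    and gs: "definable_G_set S m Gr n X act"
    and Xcl: "closedin (topF n) X"
    and \<phi>def: "definable_fun S n X \<phi>"
    and \<phi>cont: "continuous_map (subtopology (topF n) X) euclidean \<phi>"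
    and e0: "0 < e0" and ab: "a \<le> b"
begin

abbreviation "G \<equiv> carrier Gr"

lemma grp: "group Gr" using tg unfolding definable_top_group_def by blast
lemma GS: "G \<in> S m" using tg unfolding definable_top_group_def by blast
lemma GF: "G \<subseteq> Fn m" using sub[OF GS] .
lemma XS: "X \<in> S n" using gs unfolding definable_G_set_def by blast
lemma XF: "X \<subseteq> Fn n" using sub[OF XS] .
lemma act_in: "g \<in> G \<Longrightarrow> x \<in> X \<Longrightarrow> act g x \<in> X" using gs unfolding definable_G_set_def by blast
lemma act_mult: "g \<in> G \<Longrightarrow> h \<in> G \<Longrightarrow> x \<in> X \<Longrightarrow> act (g \<otimes>\<^bsub>Gr\<^esub> h) x = act g (act h x)"
  using gs unfolding definable_G_set_def by blast
lemma actdef: "definable_map S (m + n) n (tprod m G X) (\<lambda>z. act (tfst m z) (tsnd m n z))"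
  using gs unfolding definable_G_set_def by blast
lemma actcont: "continuous_map (subtopology (topF (m + n)) (tprod m G X))
        (subtopology (topF n) X) (\<lambda>z. act (tfst m z) (tsnd m n z))"
  using gs unfolding definable_G_set_def by blast
lemma one_in: "\<one>\<^bsub>Gr\<^esub> \<in> G" using grp by (simp add: group.is_monoid monoid.one_closed)

definition XG where "XG = {z \<in> Fn (n+m). blk 0 n z \<in> X \<and> blk n m z \<in> G}"
definition F where "F z = \<phi> (act (blk n m z) (blk 0 n z))"

lemma XG_tcat: assumes "x \<in> X" "g \<in> G" shows "tcat n x g \<in> XG"
proof -
  have "x \<in> Fn n" "g \<in> Fn m" using assms XF GF by blast+
  thus ?thesis using assms unfolding XG_def by (simp add: tcat_Fn)
qed

lemma F_tcat: assumes "x \<in> X" "g \<in> G" shows "F (tcat n x g) = \<phi> (act g x)"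
proof -
  have "x \<in> Fn n" "g \<in> Fn m" using assms XF GF by blast+
  thus ?thesis unfolding F_def by simp
qed

lemma XG_D: "z \<in> XG \<Longrightarrow> \<exists>x g. x \<in> X \<and> g \<in> G \<and> z = tcat n x g"
  unfolding XG_def using tcat_split by fastforce

lemma XGF: "XG \<subseteq> Fn (n + m)" unfolding XG_def by blast

lemma XGS: "XG \<in> S (n + m)"
proof -
  have "dfn S (n + m) (\<lambda>z. blk 0 n z \<in> X \<and> blk n m z \<in> G)"
    by (intro dfn_conj dfn_in[OF XS] dfn_in[OF GS]) auto
  thus ?thesis unfolding dfn_def XG_def .
qed

lemma XG_bnd: "z \<in> XG \<Longrightarrow> n \<le> i \<Longrightarrow> i < n + m \<Longrightarrow> a \<le> z i \<and> z i \<le> b"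
proof -
  assume z: "z \<in> XG" and i: "n \<le> i" "i < n + m"
  hence "blk n m z \<in> G" unfolding XG_def by blast
  from Gbnd[OF this, of "i - n"] i show ?thesis by simp
qed

lemma XGcl: "closedin (topF (n+m)) XG"
proof (rule closedin_boxI[OF e0 XGF])
  fix z assume z: "z \<in> Fn (n + m)" "z \<notin> XG"
  show "\<exists>e>0. \<forall>z'\<in>XG. \<not> inbox (n + m) z e z'"
  proof (cases "blk 0 n z \<in> X")
    case False
    obtain e where e: "0 < e" "\<forall>x'\<in>X. \<not> inbox n (blk 0 n z) e x'"
      using closedin_boxD[OF e0 Xcl blk_Fn False] by blast
    show ?thesis
    proof (intro exI[of _ e] conjI ballI e(1))
      fix z' assume "z' \<in> XG"
      then obtain x' g' where xg: "x' \<in> X" "g' \<in> G" "z' = tcat n x' g'" using XG_D by blast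
      have "inbox (n+m) z e z' = inbox (n + m) (tcat n (blk 0 n z) (blk n m z)) e (tcat n x' g')"
        using tcat_split[OF z(1)] xg(3) by simp
      also have "\<dots> = (inbox n (blk 0 n z) e x' \<and> inbox m (blk n m z) e g')" by (rule inbox_tcat)
      finally show "\<not> inbox (n + m) z e z'" using e(2) xg(1) by blast
    qed
  next
    case True
    hence False': "blk n m z \<notin> G" using z unfolding XG_def by blast
    obtain e where e: "0 < e" "\<forall>g'\<in>G. \<not> inbox m (blk n m z) e g'"
      using closedin_boxD[OF e0 Gcl blk_Fn False'] by blast
    show ?thesis
    proof (intro exI[of _ e] conjI ballI e(1))
      fix z' assume "z' \<in> XG"
      then obtain x' g' where xg: "x' \<in> X" "g' \<in> G" "z' = tcat n x' g'" using XG_D by blast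
      have "inbox (n+m) z e z' = inbox (n + m) (tcat n (blk 0 n z) (blk n m z)) e (tcat n x' g')"
        using tcat_split[OF z(1)] xg(3) by simp
      also have "\<dots> = (inbox n (blk 0 n z) e x' \<and> inbox m (blk n m z) e g')" by (rule inbox_tcat)
      finally show "\<not> inbox (n + m) z e z'" using e(2) xg(2) by blast
    qed
  qed
qed

lemma TF: "tprod m G X \<subseteq> Fn (m + n)"
  using GF XF unfolding tprod_def by (auto intro: tcat_Fn)

lemma tprod_tcat: "g \<in> G \<Longrightarrow> x \<in> X \<Longrightarrow> tcat m g x \<in> tprod m G X"
  unfolding tprod_def by blast

lemma act_box:
  assumes g: "g \<in> G" and x: "x \<in> X" and eps: "0 < \<epsilon>"
  shows "\<exists>\<delta>>0. \<forall>g'\<in>G. \<forall>x'\<in>X. inbox m g \<delta> g' \<and> inbox n x \<delta> x' \<longrightarrow> inbox n (act g x) \<epsilon> (act g' x')"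
proof -
  obtain \<delta> where d: "0 < \<delta>" "\<forall>y\<in>tprod m G X. inbox (m + n) (tcat m g x) \<delta> y \<longrightarrow>
     inbox n (act (tfst m (tcat m g x)) (tsnd m n (tcat m g x))) \<epsilon> (act (tfst m y) (tsnd m n y))"
    using cont_boxD[OF e0 TF XF actcont tprod_tcat[OF g x] eps] by blast
  show ?thesis
  proof (intro exI[of _ \<delta>] conjI ballI impI d(1))
    fix g' x' assume g': "g' \<in> G" and x': "x' \<in> X" and h: "inbox m g \<delta> g' \<and> inbox n x \<delta> x'"
    have "inbox (m + n) (tcat m g x) \<delta> (tcat m g' x')" using h by (simp add: inbox_tcat)
    hence "inbox n (act (tfst m (tcat m g x)) (tsnd m n (tcat m g x))) \<epsilon> (act (tfst m (tcat m g' x')) (tsnd m n (tcat m g' x')))"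
      using d(2) tprod_tcat[OF g' x'] by blast
    moreover have "g \<in> Fn m" "x \<in> Fn n" "g' \<in> Fn m" "x' \<in> Fn n" using g x g' x' GF XF by blast+
    ultimately show "inbox n (act g x) \<epsilon> (act g' x')" by simp
  qed
qed

lemma F_box:
  assumes z: "z \<in> XG" and eps: "0 < \<epsilon>"
  shows "\<exists>\<delta>>0. \<forall>z'\<in>XG. inbox (n+m) z \<delta> z' \<longrightarrow> F z' < F z + \<epsilon> \<and> F z < F z' + \<epsilon>"
proof -
  obtain x g where xg: "x \<in> X" "g \<in> G" "z = tcat n x g" using XG_D[OF z] by blast
  obtain \<delta>1 where d1: "0 < \<delta>1" "\<forall>y\<in>X. inbox n (act g x) \<delta>1 y \<longrightarrow> \<phi> y < \<phi> (act g x) + \<epsilon> \<and> \<phi> (act g x) < \<phi> y + \<epsilon>"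
    using cont_realD[OF e0 XF \<phi>cont act_in[OF xg(2,1)] eps] by blast
  obtain \<delta> where d: "0 < \<delta>" "\<forall>g'\<in>G. \<forall>x'\<in>X. inbox m g \<delta> g' \<and> inbox n x \<delta> x' \<longrightarrow> inbox n (act g x) \<delta>1 (act g' x')"
    using act_box[OF xg(2,1) d1(1)] by blast
  show ?thesis
  proof (intro exI[of _ \<delta>] conjI ballI impI d(1))
    fix z' assume z': "z' \<in> XG" "inbox (n + m) z \<delta> z'"
    obtain x' g' where xg': "x' \<in> X" "g' \<in> G" "z' = tcat n x' g'" using XG_D[OF z'(1)] by blast
    have "inbox n x \<delta> x' \<and> inbox m g \<delta> g'" using z'(2) xg(3) xg'(3) by (simp add: inbox_tcat)
    hence "inbox n (act g x) \<delta>1 (act g' x')" using d(2) xg' by blast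
    hence "\<phi> (act g' x') < \<phi> (act g x) + \<epsilon> \<and> \<phi> (act g x) < \<phi> (act g' x') + \<epsilon>"
      using d1(2) act_in[OF xg'(2,1)] by blast
    thus "F z' < F z + \<epsilon>" "F z < F z' + \<epsilon>" using xg xg' F_tcat by simp_all
  qed
qed

lemma lg:
  assumes z: "z \<in> XG" and s: "s < F z"
  shows "\<exists>e>0. \<exists>c. s < c \<and> (\<forall>z'\<in>XG. inbox (n+m) z e z' \<longrightarrow> c \<le> F z')"
proof (cases "\<exists>c. s < c \<and> c < F z")
  case True
  then obtain c where c: "s < c" "c < F z" by blast
  have "0 < F z - c" using c(2) by simp
  from F_box[OF z this] obtain \<delta> where d: "0 < \<delta>" "\<forall>z'\<in>XG. inbox (n+m) z \<delta> z' \<longrightarrow> F z < F z' + (F z - c)"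
    by blast
  have "\<forall>z'\<in>XG. inbox (n+m) z \<delta> z' \<longrightarrow> c \<le> F z'"
  proof (intro ballI impI)
    fix z' assume "z' \<in> XG" "inbox (n + m) z \<delta> z'"
    hence "F z < F z' + (F z - c)" using d(2) by blast
    thus "c \<le> F z'" by (simp add: algebra_simps)
  qed
  thus ?thesis using d(1) c(1) by blast
next
  case False
  have "0 < F z - s" using s by simp
  from F_box[OF z this] obtain \<delta> where d: "0 < \<delta>" "\<forall>z'\<in>XG. inbox (n+m) z \<delta> z' \<longrightarrow> F z < F z' + (F z - s)"
    by blast
  have "\<forall>z'\<in>XG. inbox (n+m) z \<delta> z' \<longrightarrow> F z \<le> F z'"
  proof (intro ballI impI)
    fix z' assume "z' \<in> XG" "inbox (n + m) z \<delta> z'"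
    hence "F z < F z' + (F z - s)" using d(2) by blast
    hence "s < F z'" by (simp add: algebra_simps)
    thus "F z \<le> F z'" using False by (meson not_le)
  qed
  thus ?thesis using d(1) s by blast
qed


lemma Gact_S: "{tcat (m + n) z (act (tfst m z) (tsnd m n z)) | z. z \<in> tprod m G X} \<in> S (m + n + n)"
  using actdef unfolding definable_map_def by blast

lemma act_graph_iff:
  assumes gF: "g \<in> Fn m" and xF: "x \<in> Fn n" and yF: "y \<in> Fn n"
  shows "tcat (m + n) (tcat m g x) y \<in> {tcat (m + n) z (act (tfst m z) (tsnd m n z)) | z. z \<in> tprod m G X}
     \<longleftrightarrow> g \<in> G \<and> x \<in> X \<and> act g x = y"
proof
  assume "tcat (m + n) (tcat m g x) y \<in> {tcat (m + n) z (act (tfst m z) (tsnd m n z)) | z. z \<in> tprod m G X}"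
  then obtain z where z: "z \<in> tprod m G X" "tcat (m + n) (tcat m g x) y = tcat (m + n) z (act (tfst m z) (tsnd m n z))"
    by blast
  obtain g' x' where gx': "g' \<in> G" "x' \<in> X" "z = tcat m g' x'" using z(1) unfolding tprod_def by blast
  have F': "g' \<in> Fn m" "x' \<in> Fn n" using gx' GF XF by blast+
  have "act (tfst m z) (tsnd m n z) = act g' x'" using gx'(3) F' by simp
  hence eq: "tcat (m + n) (tcat m g x) y = tcat (m + n) (tcat m g' x') (act g' x')" using z(2) gx'(3) by simp
  have aF: "act g' x' \<in> Fn n" using act_in[OF gx'(1,2)] XF by blast
  have "tcat m g x = tcat m g' x' \<and> y = act g' x'"
    by (rule tcat_inj[OF tcat_Fn[OF gF xF] tcat_Fn[OF F'] yF aF eq])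
  moreover hence "g = g' \<and> x = x'" using tcat_inj[OF gF F'(1) xF F'(2)] by blast
  ultimately show "g \<in> G \<and> x \<in> X \<and> act g x = y" using gx' by blast
next
  assume h: "g \<in> G \<and> x \<in> X \<and> act g x = y"
  hence "tcat m g x \<in> tprod m G X" using tprod_tcat by blast
  moreover have "act (tfst m (tcat m g x)) (tsnd m n (tcat m g x)) = y" using h gF xF by simp
  ultimately show "tcat (m + n) (tcat m g x) y \<in> {tcat (m + n) z (act (tfst m z) (tsnd m n z)) | z. z \<in> tprod m G X}"
    by (metis (mono_tags, lifting) mem_Collect_eq)
qed

lemma FDEF: "definable_fun S (n + m) XG F"
proof -
  let ?K = "n + m + 1"
  let ?Ga = "{tcat (m + n) z (act (tfst m z) (tsnd m n z)) | z. z \<in> tprod m G X}"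
  have Q: "dfn S (?K + n) (\<lambda>v. blk 0 n v \<in> X \<and> blk n m v \<in> G \<and>
      tcat (m + n) (tcat m (blk n m v) (blk 0 n v)) (blk ?K n v) \<in> ?Ga \<and>
      (blk ?K n v \<in> X \<and> \<phi> (blk ?K n v) = v (n + m)))"
    by (intro dfn_conj dfn_in[OF XS] dfn_in[OF GS] dfn_in3[OF Gact_S] dfn_graph[OF \<phi>def XF]) auto
  have P: "dfn S ?K (\<lambda>v. blk 0 n v \<in> X \<and> blk n m v \<in> G \<and> \<phi> (act (blk n m v) (blk 0 n v)) = v (n + m))"
  proof (rule dfn_exB[OF Q])
    fix v :: "nat \<Rightarrow> 'a" assume "v \<in> Fn ?K"
    have e: "blk 0 n (tcat ?K v y) = blk 0 n v" "blk n m (tcat ?K v y) = blk n m v"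
       "tcat ?K v y (n + m) = v (n + m)" for y by simp_all
    have e2: "y \<in> Fn n \<Longrightarrow> blk ?K n (tcat ?K v y) = y" for y by simp
    show "(blk 0 n v \<in> X \<and> blk n m v \<in> G \<and> \<phi> (act (blk n m v) (blk 0 n v)) = v (n + m)) =
      (\<exists>y\<in>Fn n. blk 0 n (tcat ?K v y) \<in> X \<and> blk n m (tcat ?K v y) \<in> G \<and>
        tcat (m + n) (tcat m (blk n m (tcat ?K v y)) (blk 0 n (tcat ?K v y))) (blk ?K n (tcat ?K v y)) \<in> ?Ga \<and>
        blk ?K n (tcat ?K v y) \<in> X \<and> \<phi> (blk ?K n (tcat ?K v y)) = tcat ?K v y (n + m))"
    proof
      assume h: "blk 0 n v \<in> X \<and> blk n m v \<in> G \<and> \<phi> (act (blk n m v) (blk 0 n v)) = v (n + m)"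
      let ?y = "act (blk n m v) (blk 0 n v)"
      have yX: "?y \<in> X" using act_in h by blast
      hence yF: "?y \<in> Fn n" using XF by blast
      have "tcat (m + n) (tcat m (blk n m v) (blk 0 n v)) ?y \<in> ?Ga"
        using act_graph_iff[OF blk_Fn blk_Fn yF] h by blast
      thus "\<exists>y\<in>Fn n. blk 0 n (tcat ?K v y) \<in> X \<and> blk n m (tcat ?K v y) \<in> G \<and>
        tcat (m + n) (tcat m (blk n m (tcat ?K v y)) (blk 0 n (tcat ?K v y))) (blk ?K n (tcat ?K v y)) \<in> ?Ga \<and>
        blk ?K n (tcat ?K v y) \<in> X \<and> \<phi> (blk ?K n (tcat ?K v y)) = tcat ?K v y (n + m)"
        unfolding e using e2[OF yF] yF yX h by (intro bexI[of _ ?y]) simp_all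
    next
      assume "\<exists>y\<in>Fn n. blk 0 n (tcat ?K v y) \<in> X \<and> blk n m (tcat ?K v y) \<in> G \<and>
        tcat (m + n) (tcat m (blk n m (tcat ?K v y)) (blk 0 n (tcat ?K v y))) (blk ?K n (tcat ?K v y)) \<in> ?Ga \<and>
        blk ?K n (tcat ?K v y) \<in> X \<and> \<phi> (blk ?K n (tcat ?K v y)) = tcat ?K v y (n + m)"
      then obtain y where y: "y \<in> Fn n" "blk 0 n v \<in> X" "blk n m v \<in> G"
        "tcat (m + n) (tcat m (blk n m v) (blk 0 n v)) y \<in> ?Ga" "\<phi> y = v (n + m)"
        unfolding e using e2 by auto
      have "act (blk n m v) (blk 0 n v) = y" using act_graph_iff[OF blk_Fn blk_Fn y(1)] y(4) by blast
      thus "blk 0 n v \<in> X \<and> blk n m v \<in> G \<and> \<phi> (act (blk n m v) (blk 0 n v)) = v (n + m)" using y by simp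
    qed
  qed
  have eq: "{tcat (n + m) z (tone (F z)) | z. z \<in> XG} =
     {v \<in> Fn ?K. blk 0 n v \<in> X \<and> blk n m v \<in> G \<and> \<phi> (act (blk n m v) (blk 0 n v)) = v (n + m)}"
  proof (intro equalityI subsetI)
    fix v assume "v \<in> {tcat (n + m) z (tone (F z)) | z. z \<in> XG}"
    then obtain z where z: "z \<in> XG" "v = tcat (n + m) z (tone (F z))" by blast
    have zF: "z \<in> Fn (n + m)" using z(1) XGF by blast
    have "v \<in> Fn ?K" using z(2) tcat_Fn[OF zF tone_Fn] by simp
    moreover have "blk 0 n v = blk 0 n z" "blk n m v = blk n m z" "v (n + m) = F z"
      using z(2) by (simp_all add: tone_def)
    ultimately show "v \<in> {v \<in> Fn ?K. blk 0 n v \<in> X \<and> blk n m v \<in> G \<and> \<phi> (act (blk n m v) (blk 0 n v)) = v (n + m)}"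
      using z(1) unfolding XG_def F_def by simp
  next
    fix v assume v: "v \<in> {v \<in> Fn ?K. blk 0 n v \<in> X \<and> blk n m v \<in> G \<and> \<phi> (act (blk n m v) (blk 0 n v)) = v (n + m)}"
    let ?z = "blk 0 (n + m) v"
    have "tcat (n + m) ?z (blk (n + m) 1 v) = v" using tcat_split[of v "n + m" 1] v by simp
    hence veq: "v = tcat (n + m) ?z (tone (v (n + m)))" by simp
    have zXG: "?z \<in> XG" using v unfolding XG_def by simp
    have "F ?z = v (n + m)" using v unfolding F_def by simp
    thus "v \<in> {tcat (n + m) z (tone (F z)) | z. z \<in> XG}" using veq zXG by (metis (mono_tags, lifting) mem_Collect_eq)
  qed
  show ?thesis unfolding definable_fun_def definable_map_def eq
    using P unfolding dfn_def by simp
qed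


lemma tube_app:
  fixes R :: "'a \<Rightarrow> bool"
  assumes Rdef: "{w \<in> Fn 1. R (w 0)} \<in> S 1" and Rex: "\<exists>c. R c"
    and Rmin: "\<And>c1 c2. R c1 \<Longrightarrow> R c2 \<Longrightarrow> R (min c1 c2)"
    and x0: "x0 \<in> X"
    and loc: "\<And>y. y \<in> XG \<Longrightarrow> restrict y {..<n} = x0 \<Longrightarrow> \<exists>e>0. \<exists>c. R c \<and> (\<forall>z\<in>XG. inbox (n+m) y e z \<longrightarrow> c \<le> F z)"
  shows "\<exists>e>0. \<exists>c. R c \<and> (\<forall>g\<in>G. \<forall>x\<in>X. inbox n x0 e x \<longrightarrow> c \<le> \<phi> (act g x))"
proof -
  interpret T: TUBE S "n+m" XG F R a b n e0
    by (unfold_locales) (use dc e0 XGS XGcl FDEF Rdef Rex Rmin ab XG_bnd in auto)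
  have x0F: "x0 \<in> Fn n" using x0 XF by blast
  have "\<exists>e>0. \<exists>c. R c \<and> (\<forall>z\<in>XG. inbox n x0 e z \<longrightarrow> c \<le> F z)"
  proof (rule T.tube[of n m x0])
    show "\<forall>y\<in>XG. restrict y {..<n} = x0 \<longrightarrow> T.locgood y" unfolding T.locgood_def using loc by blast
  qed (use x0F in auto)
  then obtain e c where ec: "0 < e" "R c" "\<forall>z\<in>XG. inbox n x0 e z \<longrightarrow> c \<le> F z" by blast
  have "\<forall>g\<in>G. \<forall>x\<in>X. inbox n x0 e x \<longrightarrow> c \<le> \<phi> (act g x)"
  proof (intro ballI impI)
    fix g x assume gx: "g \<in> G" "x \<in> X" "inbox n x0 e x"
    have "inbox n x0 e (tcat n x g)" using gx(3) inbox_lo[of n n x0 e x g] by simp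
    hence "c \<le> F (tcat n x g)" using ec(3) XG_tcat[OF gx(2,1)] by blast
    thus "c \<le> \<phi> (act g x)" using F_tcat[OF gx(2,1)] by simp
  qed
  thus ?thesis using ec(1,2) by blast
qed

lemma restrict_XG: "y \<in> XG \<Longrightarrow> restrict y {..<n} = x0 \<Longrightarrow> \<exists>g\<in>G. x0 \<in> X \<and> y = tcat n x0 g"
proof -
  assume y: "y \<in> XG" "restrict y {..<n} = x0"
  obtain x g where xg: "x \<in> X" "g \<in> G" "y = tcat n x g" using XG_D[OF y(1)] by blast
  have "x \<in> Fn n" using xg(1) XF by blast
  hence "x = x0" using y(2) xg(3) by (simp add: Fn_restrict_eq)
  thus ?thesis using xg by blast
qed

definition V where "V x = {\<phi> (act g x) | g. g \<in> G}"

lemma LB: assumes x0: "x0 \<in> X" shows "\<exists>c. \<forall>g\<in>G. c \<le> \<phi> (act g x0)"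
proof -
  have "\<exists>e>0. \<exists>c. True \<and> (\<forall>g\<in>G. \<forall>x\<in>X. inbox n x0 e x \<longrightarrow> c \<le> \<phi> (act g x))"
  proof (rule tube_app[OF _ _ _ x0])
    show "{w \<in> Fn 1. True} \<in> S 1" using full by simp
    fix y assume y: "y \<in> XG" "restrict y {..<n} = x0"
    have "F y - e0 < F y" using e0 by simp
    from lg[OF y(1) this] show "\<exists>e>0. \<exists>c. True \<and> (\<forall>z\<in>XG. inbox (n + m) y e z \<longrightarrow> c \<le> F z)" by blast
  qed auto
  then obtain e c where "0 < e" "\<forall>g\<in>G. \<forall>x\<in>X. inbox n x0 e x \<longrightarrow> c \<le> \<phi> (act g x)" by blast
  thus ?thesis using x0 inbox_refl by blast
qed


lemma XG_fiber:
  assumes z: "z \<in> XG" and zx: "\<forall>i<n. z i = x i" and xF: "x \<in> Fn n"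
  shows "x \<in> X \<and> (\<exists>g\<in>G. z = tcat n x g)"
proof -
  obtain x' g where xg: "x' \<in> X" "g \<in> G" "z = tcat n x' g" using XG_D[OF z] by blast
  have "x' = x"
  proof
    fix i show "x' i = x i"
    proof (cases "i < n")
      case True thus ?thesis using zx xg(3) by simp
    next
      case False thus ?thesis using xF xg(1) XF by (auto simp: Fn_iff)
    qed
  qed
  thus ?thesis using xg by blast
qed

lemma dfn_H:
  assumes "ox + n \<le> M" "j < M"
  shows "dfn S M (\<lambda>v. blk ox n v \<in> X \<and> (\<exists>g\<in>G. \<phi> (act g (blk ox n v)) = v j))"
proof -
  have inner: "dfn S (M + (n + m)) (\<lambda>v. (blk M (n+m) v \<in> XG \<and> F (blk M (n+m) v) = v j) \<and>
      (\<forall>i<n. v (M + i) = v (ox + i)) \<and> blk ox n v \<in> X)"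
    using assms by (intro dfn_conj dfn_graph[OF FDEF XGF] dfn_ball_lt dfn_eq dfn_in[OF XS]) auto
  show ?thesis
  proof (rule dfn_exB[OF inner])
    fix v :: "nat \<Rightarrow> 'a" assume "v \<in> Fn M"
    have e1: "z \<in> Fn (n+m) \<Longrightarrow> blk M (n+m) (tcat M v z) = z" for z by simp
    have e2: "tcat M v z j = v j" "blk ox n (tcat M v z) = blk ox n v" for z using assms by simp_all
    have e3: "(\<forall>i<n. tcat M v z (M + i) = tcat M v z (ox + i)) \<longleftrightarrow> (\<forall>i<n. z i = blk ox n v i)" for z
      using assms by auto
    show "(blk ox n v \<in> X \<and> (\<exists>g\<in>G. \<phi> (act g (blk ox n v)) = v j)) =
      (\<exists>z\<in>Fn (n + m). (blk M (n + m) (tcat M v z) \<in> XG \<and> F (blk M (n + m) (tcat M v z)) = tcat M v z j) \<and>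
        (\<forall>i<n. tcat M v z (M + i) = tcat M v z (ox + i)) \<and> blk ox n (tcat M v z) \<in> X)"
      unfolding e2 e3
    proof
      assume h: "blk ox n v \<in> X \<and> (\<exists>g\<in>G. \<phi> (act g (blk ox n v)) = v j)"
      then obtain g where g: "g \<in> G" "\<phi> (act g (blk ox n v)) = v j" by blast
      let ?z = "tcat n (blk ox n v) g"
      have zXG: "?z \<in> XG" using XG_tcat h g(1) by blast
      hence zF: "?z \<in> Fn (n + m)" using XGF by blast
      have "F ?z = v j" using F_tcat h g by simp
      moreover have "\<forall>i<n. ?z i = blk ox n v i" by simp
      ultimately show "\<exists>z\<in>Fn (n + m). (blk M (n + m) (tcat M v z) \<in> XG \<and> F (blk M (n + m) (tcat M v z)) = v j) \<and>
        (\<forall>i<n. z i = blk ox n v i) \<and> blk ox n v \<in> X"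
        using zXG zF e1[OF zF] h by (intro bexI[of _ ?z]) simp_all
    next
      assume "\<exists>z\<in>Fn (n + m). (blk M (n + m) (tcat M v z) \<in> XG \<and> F (blk M (n + m) (tcat M v z)) = v j) \<and>
        (\<forall>i<n. z i = blk ox n v i) \<and> blk ox n v \<in> X"
      then obtain z where z: "z \<in> Fn (n + m)" "z \<in> XG" "F z = v j" "\<forall>i<n. z i = blk ox n v i" "blk ox n v \<in> X"
        using e1 by auto
      obtain g where g: "g \<in> G" "z = tcat n (blk ox n v) g" using XG_fiber[OF z(2) z(4) blk_Fn] by blast
      have "\<phi> (act g (blk ox n v)) = v j" using z(3) F_tcat[OF z(5) g(1)] g(2) by simp
      thus "blk ox n v \<in> X \<and> (\<exists>g\<in>G. \<phi> (act g (blk ox n v)) = v j)" using z(5) g(1) by blast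
    qed
  qed
qed

lemma dfn_L:
  assumes "ox + n \<le> M" "j < M"
  shows "dfn S M (\<lambda>v. blk ox n v \<in> X \<and> (\<forall>g\<in>G. v j \<le> \<phi> (act g (blk ox n v))))"
proof -
  let ?K = "M + (n + m)"
  have inner: "dfn S (Suc ?K) (\<lambda>v. (blk M (n+m) v \<in> XG \<and> F (blk M (n+m) v) = v ?K) \<and>
      (\<forall>i<n. v (M + i) = v (ox + i)) \<longrightarrow> v j \<le> v ?K)"
    using assms by (intro dfn_imp dfn_conj dfn_graph[OF FDEF XGF] dfn_ball_lt dfn_eq dfn_le) auto
  have mid: "dfn S ?K (\<lambda>v. blk M (n+m) v \<in> XG \<and> (\<forall>i<n. v (M + i) = v (ox + i)) \<longrightarrow> v j \<le> F (blk M (n+m) v))"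
  proof (rule dfn_all[OF inner])
    fix v :: "nat \<Rightarrow> 'a" assume "v \<in> Fn ?K"
    have e1: "blk M (n+m) (v(?K := t)) = blk M (n+m) v" "(v(?K := t)) ?K = t" "(v(?K := t)) j = v j" for t
      using assms by simp_all
    have e2: "(\<forall>i<n. (v(?K := t)) (M + i) = (v(?K := t)) (ox + i)) \<longleftrightarrow> (\<forall>i<n. v (M + i) = v (ox + i))" for t
      using assms by auto
    show "(blk M (n + m) v \<in> XG \<and> (\<forall>i<n. v (M + i) = v (ox + i)) \<longrightarrow> v j \<le> F (blk M (n + m) v)) =
      (\<forall>t. (blk M (n + m) (v(?K := t)) \<in> XG \<and> F (blk M (n + m) (v(?K := t))) = (v(?K := t)) ?K) \<and>
           (\<forall>i<n. (v(?K := t)) (M + i) = (v(?K := t)) (ox + i)) \<longrightarrow> (v(?K := t)) j \<le> (v(?K := t)) ?K)"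
      unfolding e1 e2 by blast
  qed
  have all: "dfn S M (\<lambda>v. \<forall>z\<in>Fn (n+m). z \<in> XG \<and> (\<forall>i<n. z i = blk ox n v i) \<longrightarrow> v j \<le> F z)"
  proof (rule dfn_allB[OF mid])
    fix v :: "nat \<Rightarrow> 'a" assume "v \<in> Fn M"
    have e1: "z \<in> Fn (n+m) \<Longrightarrow> blk M (n+m) (tcat M v z) = z" for z by simp
    have e2: "tcat M v z j = v j" for z using assms by simp_all
    have e3: "(\<forall>i<n. tcat M v z (M + i) = tcat M v z (ox + i)) \<longleftrightarrow> (\<forall>i<n. z i = blk ox n v i)" for z
      using assms by auto
    show "(\<forall>z\<in>Fn (n + m). z \<in> XG \<and> (\<forall>i<n. z i = blk ox n v i) \<longrightarrow> v j \<le> F z) =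
      (\<forall>y\<in>Fn (n + m). blk M (n + m) (tcat M v y) \<in> XG \<and> (\<forall>i<n. tcat M v y (M + i) = tcat M v y (ox + i)) \<longrightarrow>
          tcat M v y j \<le> F (blk M (n + m) (tcat M v y)))"
      unfolding e2 e3 using e1 by auto
  qed
  show ?thesis
  proof (rule dfn_cong[OF dfn_conj[OF dfn_in[OF XS assms(1)] all]])
    fix v :: "nat \<Rightarrow> 'a" assume "v \<in> Fn M"
    show "(blk ox n v \<in> X \<and> (\<forall>z\<in>Fn (n + m). z \<in> XG \<and> (\<forall>i<n. z i = blk ox n v i) \<longrightarrow> v j \<le> F z)) =
          (blk ox n v \<in> X \<and> (\<forall>g\<in>G. v j \<le> \<phi> (act g (blk ox n v))))"
    proof
      assume h: "blk ox n v \<in> X \<and> (\<forall>z\<in>Fn (n + m). z \<in> XG \<and> (\<forall>i<n. z i = blk ox n v i) \<longrightarrow> v j \<le> F z)"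
      show "blk ox n v \<in> X \<and> (\<forall>g\<in>G. v j \<le> \<phi> (act g (blk ox n v)))"
      proof (intro conjI ballI)
        show "blk ox n v \<in> X" using h by blast
        fix g assume g: "g \<in> G"
        have "tcat n (blk ox n v) g \<in> XG" using XG_tcat h g by blast
        moreover hence "tcat n (blk ox n v) g \<in> Fn (n+m)" using XGF by blast
        ultimately have "v j \<le> F (tcat n (blk ox n v) g)" using h by simp
        thus "v j \<le> \<phi> (act g (blk ox n v))" using F_tcat h g by simp
      qed
    next
      assume h: "blk ox n v \<in> X \<and> (\<forall>g\<in>G. v j \<le> \<phi> (act g (blk ox n v)))"
      show "blk ox n v \<in> X \<and> (\<forall>z\<in>Fn (n + m). z \<in> XG \<and> (\<forall>i<n. z i = blk ox n v i) \<longrightarrow> v j \<le> F z)"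
      proof (intro conjI ballI impI)
        show "blk ox n v \<in> X" using h by blast
        fix z :: "nat \<Rightarrow> 'a" assume z: "z \<in> Fn (n + m)" and zz: "z \<in> XG \<and> (\<forall>i<n. z i = blk ox n v i)"
        obtain g where g: "g \<in> G" "z = tcat n (blk ox n v) g" using XG_fiber[OF _ _ blk_Fn] zz by blast
        thus "v j \<le> F z" using h F_tcat by simp
      qed
    qed
  qed
qed

end



lemma tcat_Suc[simp]: "tcat (Suc 0) w y (Suc i) = y i" by (simp add: tcat_def)

lemma is_inf_unique: "is_inf B s \<Longrightarrow> is_inf B t \<Longrightarrow> s = t"
  unfolding is_inf_def by (meson order.antisym)

context MAIN
begin

lemma Vset: assumes x0: "x0 \<in> X" shows "{w \<in> Fn 1. \<exists>g\<in>G. \<phi> (act g x0) = w 0} \<in> S 1"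
proof -
  have inner: "dfn S (1 + n) (\<lambda>v. (\<forall>i<n. v (1 + i) = x0 i) \<and> (blk 1 n v \<in> X \<and> (\<exists>g\<in>G. \<phi> (act g (blk 1 n v)) = v 0)))"
    by (intro dfn_conj dfn_ball_lt dfn_const dfn_H) auto
  have "dfn S 1 (\<lambda>w. \<exists>g\<in>G. \<phi> (act g x0) = w 0)"
  proof (rule dfn_exB[OF inner])
    fix w :: "nat \<Rightarrow> 'a" assume "w \<in> Fn 1"
    have x0F: "x0 \<in> Fn n" using x0 XF by blast
    have e1: "y \<in> Fn n \<Longrightarrow> blk 1 n (tcat 1 w y) = y" for y by simp
    have e2: "tcat 1 w y 0 = w 0" "(\<forall>i<n. tcat 1 w y (1 + i) = x0 i) \<longleftrightarrow> (\<forall>i<n. y i = x0 i)" for y by simp_all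
    have e3: "y \<in> Fn n \<Longrightarrow> (\<forall>i<n. y i = x0 i) \<longleftrightarrow> y = x0" for y
    proof
      assume "y \<in> Fn n" "\<forall>i<n. y i = x0 i"
      thus "y = x0" using x0F by (intro ext) (metis Fn_iff not_less)
    qed simp
    show "(\<exists>g\<in>G. \<phi> (act g x0) = w 0) =
      (\<exists>y\<in>Fn n. (\<forall>i<n. tcat 1 w y (1 + i) = x0 i) \<and> blk 1 n (tcat 1 w y) \<in> X \<and>
          (\<exists>g\<in>G. \<phi> (act g (blk 1 n (tcat 1 w y))) = tcat 1 w y 0))"
      unfolding e2
    proof
      assume "\<exists>g\<in>G. \<phi> (act g x0) = w 0"
      thus "\<exists>y\<in>Fn n. (\<forall>i<n. y i = x0 i) \<and> blk 1 n (tcat 1 w y) \<in> X \<and> (\<exists>g\<in>G. \<phi> (act g (blk 1 n (tcat 1 w y))) = w 0)"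
        using x0F x0 e1[OF x0F] by (intro bexI[of _ x0]) auto
    next
      assume "\<exists>y\<in>Fn n. (\<forall>i<n. y i = x0 i) \<and> blk 1 n (tcat 1 w y) \<in> X \<and> (\<exists>g\<in>G. \<phi> (act g (blk 1 n (tcat 1 w y))) = w 0)"
      then obtain y where y: "y \<in> Fn n" "\<forall>i<n. y i = x0 i" "\<exists>g\<in>G. \<phi> (act g (blk 1 n (tcat 1 w y))) = w 0" by blast
      have "y = x0" using e3 y(1,2) by blast
      thus "\<exists>g\<in>G. \<phi> (act g x0) = w 0" using y(3) e1[OF y(1)] by simp
    qed
  qed
  thus ?thesis unfolding dfn_def .
qed

lemma inf_ex: assumes x0: "x0 \<in> X" shows "\<exists>s. is_inf (V x0) s"
proof -
  let ?W = "{w \<in> Fn 1. \<exists>g\<in>G. \<phi> (act g x0) = w 0}"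
  have img: "(\<lambda>x. x 0) ` ?W = V x0"
  proof (intro equalityI subsetI)
    fix t assume "t \<in> V x0"
    then obtain g where g: "g \<in> G" "t = \<phi> (act g x0)" unfolding V_def by blast
    have "tone t \<in> ?W" using g tone_Fn[of t] tone0[of t] by auto
    moreover have "t = tone t 0" by simp
    ultimately show "t \<in> (\<lambda>x. x 0) ` ?W" by blast
  next
    fix t assume "t \<in> (\<lambda>x. x 0) ` ?W"
    then obtain w :: "nat \<Rightarrow> 'a" and g where wg: "g \<in> G" "\<phi> (act g x0) = w 0" "t = w 0" by blast
    hence "t = \<phi> (act g x0)" by simp
    thus "t \<in> V x0" unfolding V_def using wg(1) by blast
  qed
  have h: "let B = (\<lambda>x. x 0) ` ?W in
        (B \<noteq> {} \<and> (\<exists>b. \<forall>y\<in>B. y \<le> b) \<longrightarrow> Ex (is_sup B)) \<and>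
          (B \<noteq> {} \<and> (\<exists>b. Ball B ((\<le>) b)) \<longrightarrow> Ex (is_inf B))"
    using bspec[OF dc[unfolded definably_complete_def] Vset[OF x0]] .
  hence h2: "V x0 \<noteq> {} \<and> (\<exists>b. Ball (V x0) ((\<le>) b)) \<longrightarrow> Ex (is_inf (V x0))"
    unfolding img Let_def by (rule conjunct2)
  have ne: "V x0 \<noteq> {}" using one_in unfolding V_def by blast
  obtain c where "\<forall>g\<in>G. c \<le> \<phi> (act g x0)" using LB[OF x0] by blast
  hence "\<exists>b. Ball (V x0) ((\<le>) b)" unfolding V_def by blast
  thus ?thesis using h2 ne by blast
qed

lemma Rlt: "{w \<in> Fn 1. s < w 0} \<in> S 1"
  using dfn_c_lt[of 0 1 s] unfolding dfn_def by simp

lemma attain: assumes x0: "x0 \<in> X" and s: "is_inf (V x0) s" shows "\<exists>g\<in>G. s = \<phi> (act g x0)"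
proof (rule ccontr)
  assume na: "\<not> (\<exists>g\<in>G. s = \<phi> (act g x0))"
  have "\<exists>e>0. \<exists>c. s < c \<and> (\<forall>g\<in>G. \<forall>x\<in>X. inbox n x0 e x \<longrightarrow> c \<le> \<phi> (act g x))"
  proof (rule tube_app[OF Rlt _ _ x0])
    show "\<exists>c. s < c" using e0 by (intro exI[of _ "s + e0"]) simp
    show "\<And>c1 c2. s < c1 \<Longrightarrow> s < c2 \<Longrightarrow> s < min c1 c2" by simp
    fix y assume y: "y \<in> XG" "restrict y {..<n} = x0"
    obtain g where g: "g \<in> G" "y = tcat n x0 g" using restrict_XG[OF y] by blast
    have Fy: "F y = \<phi> (act g x0)" using F_tcat[OF x0 g(1)] g(2) by simp
    have "s \<le> F y" using s g(1) Fy unfolding is_inf_def V_def by blast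
    moreover have "s \<noteq> F y" using na g(1) Fy by blast
    ultimately have "s < F y" by simp
    from lg[OF y(1) this] show "\<exists>e>0. \<exists>c. s < c \<and> (\<forall>z\<in>XG. inbox (n + m) y e z \<longrightarrow> c \<le> F z)" .
  qed
  then obtain e c where ec: "0 < e" "s < c" "\<forall>g\<in>G. \<forall>x\<in>X. inbox n x0 e x \<longrightarrow> c \<le> \<phi> (act g x)" by blast
  have "\<forall>y\<in>V x0. c \<le> y" using ec(3) x0 inbox_refl[OF ec(1)] unfolding V_def by blast
  hence "c \<le> s" using s unfolding is_inf_def by blast
  thus False using ec(2) by simp
qed

definition \<Phi> where "\<Phi> x = (SOME s. is_inf (V x) s)"

lemma \<Phi>inf: "x \<in> X \<Longrightarrow> is_inf (V x) (\<Phi> x)"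
  unfolding \<Phi>_def using inf_ex by (rule someI_ex) 

lemma \<Phi>att: "x \<in> X \<Longrightarrow> \<exists>g\<in>G. \<Phi> x = \<phi> (act g x)"
  using attain \<Phi>inf by blast

lemma \<Phi>le: "x \<in> X \<Longrightarrow> g \<in> G \<Longrightarrow> \<Phi> x \<le> \<phi> (act g x)"
  using \<Phi>inf unfolding is_inf_def V_def by blast

lemma \<Phi>char: assumes x: "x \<in> X"
  shows "(t = \<Phi> x) \<longleftrightarrow> ((\<exists>g\<in>G. \<phi> (act g x) = t) \<and> (\<forall>g\<in>G. t \<le> \<phi> (act g x)))"
proof
  assume "t = \<Phi> x" thus "(\<exists>g\<in>G. \<phi> (act g x) = t) \<and> (\<forall>g\<in>G. t \<le> \<phi> (act g x))"
    using \<Phi>att[OF x] \<Phi>le[OF x] by metis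
next
  assume h: "(\<exists>g\<in>G. \<phi> (act g x) = t) \<and> (\<forall>g\<in>G. t \<le> \<phi> (act g x))"
  have "is_inf (V x) t" unfolding is_inf_def V_def
  proof (intro conjI allI impI ballI)
    fix y assume "y \<in> {\<phi> (act g x) |g. g \<in> G}" thus "t \<le> y" using h by blast
  next
    fix u assume "\<forall>y\<in>{\<phi> (act g x) |g. g \<in> G}. u \<le> y" thus "u \<le> t" using h by blast
  qed
  thus "t = \<Phi> x" using is_inf_unique \<Phi>inf[OF x] by blast
qed

lemma \<Phi>def: "definable_fun S n X \<Phi>"
proof -
  have D: "dfn S (n + 1) (\<lambda>v. (blk 0 n v \<in> X \<and> (\<exists>g\<in>G. \<phi> (act g (blk 0 n v)) = v n)) \<and>
       (blk 0 n v \<in> X \<and> (\<forall>g\<in>G. v n \<le> \<phi> (act g (blk 0 n v)))))"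
    by (intro dfn_conj dfn_H dfn_L) auto
  have eq: "{tcat n x (tone (\<Phi> x)) | x. x \<in> X} = {v \<in> Fn (n + 1). (blk 0 n v \<in> X \<and> (\<exists>g\<in>G. \<phi> (act g (blk 0 n v)) = v n)) \<and>
       (blk 0 n v \<in> X \<and> (\<forall>g\<in>G. v n \<le> \<phi> (act g (blk 0 n v))))}"
  proof (intro equalityI subsetI)
    fix v assume "v \<in> {tcat n x (tone (\<Phi> x)) | x. x \<in> X}"
    then obtain x where x: "x \<in> X" "v = tcat n x (tone (\<Phi> x))" by blast
    have xF: "x \<in> Fn n" using x(1) XF by blast
    have "blk 0 n v = x" "v n = \<Phi> x" using x(2) xF by simp_all
    moreover have "v \<in> Fn (n + 1)" using x(2) tcat_Fn[OF xF tone_Fn] by simp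
    ultimately show "v \<in> {v \<in> Fn (n + 1). (blk 0 n v \<in> X \<and> (\<exists>g\<in>G. \<phi> (act g (blk 0 n v)) = v n)) \<and>
       (blk 0 n v \<in> X \<and> (\<forall>g\<in>G. v n \<le> \<phi> (act g (blk 0 n v))))}"
      using \<Phi>char[OF x(1), of "\<Phi> x"] x(1) by simp
  next
    fix v assume v: "v \<in> {v \<in> Fn (n + 1). (blk 0 n v \<in> X \<and> (\<exists>g\<in>G. \<phi> (act g (blk 0 n v)) = v n)) \<and>
       (blk 0 n v \<in> X \<and> (\<forall>g\<in>G. v n \<le> \<phi> (act g (blk 0 n v))))}"
    have "tcat n (blk 0 n v) (blk n 1 v) = v" using tcat_split[of v n 1] v by simp
    hence veq: "v = tcat n (blk 0 n v) (tone (v n))" by simp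
    have xX: "blk 0 n v \<in> X" using v by blast
    have "v n = \<Phi> (blk 0 n v)" using \<Phi>char[OF xX, of "v n"] v by blast
    thus "v \<in> {tcat n x (tone (\<Phi> x)) | x. x \<in> X}" using veq xX by (metis (mono_tags, lifting) mem_Collect_eq)
  qed
  show ?thesis unfolding definable_fun_def definable_map_def eq using D unfolding dfn_def by simp
qed

lemma Vinv: assumes g: "g \<in> G" and x: "x \<in> X" shows "V (act g x) = V x"
proof (intro equalityI subsetI)
  fix t assume "t \<in> V (act g x)"
  then obtain h where h: "h \<in> G" "t = \<phi> (act h (act g x))" unfolding V_def by blast
  have "act h (act g x) = act (h \<otimes>\<^bsub>Gr\<^esub> g) x" using act_mult[OF h(1) g x] by simp
  moreover have "h \<otimes>\<^bsub>Gr\<^esub> g \<in> G" using grp h(1) g by (simp add: group.is_monoid monoid.m_closed)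
  moreover have "t = \<phi> (act (h \<otimes>\<^bsub>Gr\<^esub> g) x)" using h(2) calculation(1) by simp
  ultimately show "t \<in> V x" unfolding V_def by blast
next
  fix t assume "t \<in> V x"
  then obtain k where k: "k \<in> G" "t = \<phi> (act k x)" unfolding V_def by blast
  let ?h = "k \<otimes>\<^bsub>Gr\<^esub> inv\<^bsub>Gr\<^esub> g"
  have ig: "inv\<^bsub>Gr\<^esub> g \<in> G" using grp g by (simp add: group.inv_closed)
  have hG: "?h \<in> G" using grp k(1) ig by (simp add: group.is_monoid monoid.m_closed)
  have "?h \<otimes>\<^bsub>Gr\<^esub> g = k \<otimes>\<^bsub>Gr\<^esub> (inv\<^bsub>Gr\<^esub> g \<otimes>\<^bsub>Gr\<^esub> g)"
    using grp k(1) ig g by (simp add: group.is_monoid monoid.m_assoc)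
  also have "\<dots> = k" using grp k(1) g by (simp add: group.l_inv group.is_monoid monoid.r_one)
  finally have "act k x = act ?h (act g x)" using act_mult[OF hG g x] by simp
  hence "t = \<phi> (act ?h (act g x))" using k(2) by simp
  thus "t \<in> V (act g x)" unfolding V_def using hG by blast
qed

lemma \<Phi>inv: "g \<in> G \<Longrightarrow> x \<in> X \<Longrightarrow> \<Phi> (act g x) = \<Phi> x"
  unfolding \<Phi>_def using Vinv by simp

lemma \<Phi>cont: "continuous_map (subtopology (topF n) X) euclidean \<Phi>"
proof (rule cont_realI[OF e0 XF])
  fix x0 U assume x0: "x0 \<in> X" and U: "open U" "\<Phi> x0 \<in> U"
  obtain e where e: "0 < e" "\<forall>y. y < \<Phi> x0 + e \<and> \<Phi> x0 < y + e \<longrightarrow> y \<in> U"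
    using open_pt[OF U e0] by blast
  obtain g0 where g0: "g0 \<in> G" "\<Phi> x0 = \<phi> (act g0 x0)" using \<Phi>att[OF x0] by blast
  have z0: "tcat n x0 g0 \<in> XG" using XG_tcat[OF x0 g0(1)] .
  obtain \<delta>1 where d1: "0 < \<delta>1" "\<forall>z'\<in>XG. inbox (n+m) (tcat n x0 g0) \<delta>1 z' \<longrightarrow>
      F z' < F (tcat n x0 g0) + e \<and> F (tcat n x0 g0) < F z' + e"
    using F_box[OF z0 e(1)] by blast
  have up: "\<Phi> x < \<Phi> x0 + e" if x: "x \<in> X" "inbox n x0 \<delta>1 x" for x
  proof -
    have "inbox (n+m) (tcat n x0 g0) \<delta>1 (tcat n x g0)" using x(2) inbox_refl[OF d1(1)] by (simp add: inbox_tcat)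
    hence "F (tcat n x g0) < F (tcat n x0 g0) + e" using d1(2) XG_tcat[OF x(1) g0(1)] by blast
    hence "\<phi> (act g0 x) < \<Phi> x0 + e" using F_tcat[OF x(1) g0(1)] F_tcat[OF x0 g0(1)] g0(2) by simp
    thus ?thesis using \<Phi>le[OF x(1) g0(1)] by (meson le_less_trans)
  qed
  let ?s = "\<Phi> x0 - e"
  have "\<exists>e>0. \<exists>c. ?s < c \<and> (\<forall>g\<in>G. \<forall>x\<in>X. inbox n x0 e x \<longrightarrow> c \<le> \<phi> (act g x))"
  proof (rule tube_app[OF Rlt _ _ x0])
    show "\<exists>c. ?s < c" using e0 by (intro exI[of _ "?s + e0"]) simp
    show "\<And>c1 c2. ?s < c1 \<Longrightarrow> ?s < c2 \<Longrightarrow> ?s < min c1 c2" by simp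
    fix y assume y: "y \<in> XG" "restrict y {..<n} = x0"
    obtain g where g: "g \<in> G" "y = tcat n x0 g" using restrict_XG[OF y] by blast
    have Fy: "F y = \<phi> (act g x0)" using F_tcat[OF x0 g(1)] g(2) by simp
    have "\<Phi> x0 \<le> F y" using \<Phi>le[OF x0 g(1)] Fy by simp
    moreover have "?s < \<Phi> x0" using e(1) by simp
    ultimately have "?s < F y" by (meson less_le_trans)
    from lg[OF y(1) this] show "\<exists>e>0. \<exists>c. ?s < c \<and> (\<forall>z\<in>XG. inbox (n + m) y e z \<longrightarrow> c \<le> F z)" .
  qed
  then obtain \<delta>2 c where d2: "0 < \<delta>2" "?s < c" "\<forall>g\<in>G. \<forall>x\<in>X. inbox n x0 \<delta>2 x \<longrightarrow> c \<le> \<phi> (act g x)" by blast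
  have lo: "\<Phi> x0 < \<Phi> x + e" if x: "x \<in> X" "inbox n x0 \<delta>2 x" for x
  proof -
    obtain g where g: "g \<in> G" "\<Phi> x = \<phi> (act g x)" using \<Phi>att[OF x(1)] by blast
    have "c \<le> \<Phi> x" using d2(3) g x by simp
    hence "?s < \<Phi> x" using d2(2) by simp
    thus ?thesis by (simp add: algebra_simps)
  qed
  show "\<exists>d>0. \<forall>y\<in>X. inbox n x0 d y \<longrightarrow> \<Phi> y \<in> U"
  proof (intro exI[of _ "min \<delta>1 \<delta>2"] conjI ballI impI)
    show "0 < min \<delta>1 \<delta>2" using d1(1) d2(1) by simp
    fix y assume y: "y \<in> X" "inbox n x0 (min \<delta>1 \<delta>2) y"
    have "inbox n x0 \<delta>1 y" "inbox n x0 \<delta>2 y" using y(2) inbox_mono by (metis min.cobounded1, metis min.cobounded2)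
    thus "\<Phi> y \<in> U" using e(2) up lo y(1) by blast
  qed
qed

end

theorem lemma2p1:
  fixes S :: "nat \<Rightarrow> (nat \<Rightarrow> 'a::{linordered_ab_group_add,linorder_topology}) set set"
    and Gr :: "(nat \<Rightarrow> 'a) monoid"
    and m n :: nat
    and X :: "(nat \<Rightarrow> 'a) set"
    and act :: "(nat \<Rightarrow> 'a) \<Rightarrow> (nat \<Rightarrow> 'a) \<Rightarrow> (nat \<Rightarrow> 'a)"
    and \<phi> :: "(nat \<Rightarrow> 'a) \<Rightarrow> 'a"
  assumes "expansion_structure S"
    and "definably_complete S"
    and "definable_top_group S m Gr"
    and "definably_compact m (carrier Gr)"
    and "definable_G_set S m Gr n X act"
    and "closedin (topF n) X"
    and "definable_fun S n X \<phi>"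
    and "continuous_map (subtopology (topF n) X) euclidean \<phi>"
  shows "\<exists>\<Phi>. (\<forall>x\<in>X. is_inf {\<phi> (act g x) | g. g \<in> carrier Gr} (\<Phi> x))
           \<and> definable_fun S n X \<Phi>
           \<and> (\<forall>g\<in>carrier Gr. \<forall>x\<in>X. \<Phi> (act g x) = \<Phi> x)
           \<and> continuous_map (subtopology (topF n) X) euclidean \<Phi>
           \<and> (\<forall>x\<in>X. \<exists>g\<in>carrier Gr. \<Phi> x = \<phi> (act g x))"
proof (cases "\<exists>e::'a. 0 < e")
  case False
  have all0: "y = 0" for y :: 'a
  proof (rule ccontr)
    assume "y \<noteq> 0"
    hence "0 < y \<or> 0 < - y" by (metis neg_0_less_iff_less not_less_iff_gr_or_eq)
    thus False using False by blast
  qed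
  have eqab: "(c::'a) \<le> d" for c d using all0[of c] all0[of d] by simp
  have one: "\<one>\<^bsub>Gr\<^esub> \<in> carrier Gr" using assms(3) unfolding definable_top_group_def
    by (simp add: group.is_monoid monoid.one_closed)
  show ?thesis
  proof (intro exI[of _ \<phi>] conjI ballI)
    fix x assume "x \<in> X"
    show "is_inf {\<phi> (act g x) | g. g \<in> carrier Gr} (\<phi> x)" unfolding is_inf_def using eqab by blast
  next
    fix g x assume "g \<in> carrier Gr" "x \<in> X"
    show "\<phi> (act g x) = \<phi> x" using all0 by metis
  next
    fix x assume "x \<in> X"
    show "\<exists>g\<in>carrier Gr. \<phi> x = \<phi> (act g x)" using one all0 by metis
  qed (use assms in auto)
next
  case True
  then obtain e0 :: 'a where e0: "0 < e0" by blast
  obtain a b where ab: "\<forall>x\<in>carrier Gr. \<forall>i<m. a \<le> x i \<and> x i \<le> b" and Gcl: "closedin (topF m) (carrier Gr)"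
    using assms(4) unfolding definably_compact_def by blast
  interpret M: MAIN S Gr m n X act \<phi> e0 "min a b" b
  proof (unfold_locales)
    show "expansion_structure S" by (rule assms(1))
    show "\<And>g i. g \<in> carrier Gr \<Longrightarrow> i < m \<Longrightarrow> min a b \<le> g i \<and> g i \<le> b"
      using ab by (meson min.coboundedI1)
  qed (use assms e0 Gcl in auto)
  show ?thesis
  proof (intro exI[of _ M.\<Phi>] conjI ballI)
    fix x assume "x \<in> X"
    thus "is_inf {\<phi> (act g x) | g. g \<in> carrier Gr} (M.\<Phi> x)" using M.\<Phi>inf unfolding M.V_def by blast
  next
    show "definable_fun S n X M.\<Phi>" by (rule M.\<Phi>def)
  next
    fix g x assume "g \<in> carrier Gr" "x \<in> X"
    thus "M.\<Phi> (act g x) = M.\<Phi> x" by (rule M.\<Phi>inv)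
  next
    show "continuous_map (subtopology (topF n) X) euclidean M.\<Phi>" by (rule M.\<Phi>cont)
  next
    fix x assume "x \<in> X"
    thus "\<exists>g\<in>carrier Gr. M.\<Phi> x = \<phi> (act g x)" by (rule M.\<Phi>att)
  qed
qed


end
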